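(* Let $X,Y \in \mathcal{B(H)}$, $q \in \mathcal{D'}$ and $0 \le \gamma \le 1$. Then \begin{align*} \frac{|q|}{2}\sup_{\theta \in \mathbb{R}}\left\lbrace \|e^{i\theta}X+e^{-i\theta}Y^*\|\right\rbrace \le w_q\left(\begin{bmatrix} 0 & X\\ Y & 0 \end{bmatrix}\right)\le & \frac{|q|}{2}\| |X|^{2\gamma}+|Y^*|^{2(1-\gamma)}\|^\frac{1}{2}\| |X^*|^{2(1-\gamma)}+|Y|^{2\gamma}\|^\frac{1}{2}\\ &+\sqrt{1-|q|^2}\max\{ \|X\|, \|Y\|\}. \end{align*}
   Context: $\mathcal{H}$ is a complex Hilbert space, $\mathcal{B(H)}$ the bounded operators on it with operator norm; $2\times2$ operator matrices act on $\mathcal{H}\oplus\mathcal{H}$. $|T|=(T^*T)^{1/2}$. $\mathcal{D}$ is the closed unit disc in $\mathbb{C}$, $\mathcal{D'}=\mathcal{D}\setminus\{0\}$. $w_q(T)=\sup\{|\langle Tx,y\rangle| : \|x\|=\|y\|=1,\ \langle x,y\rangle=q\}$. *)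

theory Defs
  imports "HOL-Analysis.Analysis"
begin

text \<open>The library has no complex inner product spaces, so we introduce the class of
complex Hilbert spaces: a Banach space with a complex scalar multiplication compatible with
the real one, and a complex inner product (linear in the first argument, conjugate-linear in
the second) that induces the norm.\<close>

class chilbert = banach +
  fixes scaleC :: "complex \<Rightarrow> 'a \<Rightarrow> 'a"
    and cinner :: "'a \<Rightarrow> 'a \<Rightarrow> complex"
  assumes scaleC_add_right: "scaleC a (x + y) = scaleC a x + scaleC a y"
    and scaleC_add_left: "scaleC (a + b) x = scaleC a x + scaleC b x"
    and scaleC_scaleC: "scaleC a (scaleC b x) = scaleC (a * b) x"
    and scaleC_one: "scaleC 1 x = x"
    and scaleR_scaleC: "scaleR r x = scaleC (complex_of_real r) x"
    and cinner_add_left: "cinner (x + y) z = cinner x z + cinner y z"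
    and cinner_scaleC_left: "cinner (scaleC a x) y = a * cinner x y"
    and cinner_commute: "cinner y x = cnj (cinner x y)"
    and cinner_self: "cinner x x = complex_of_real ((norm x)\<^sup>2)"

text \<open>The complex numbers form a complex Hilbert space (so the class is inhabited).\<close>

instantiation complex :: chilbert
begin
definition scaleC_complex_def: "scaleC a (x::complex) = a * x"
definition cinner_complex_def: "cinner (x::complex) y = x * cnj y"
instance
proof
  fix a b x y z :: complex and r :: real
  show "scaleC a (x + y) = scaleC a x + scaleC a y" by (simp add: scaleC_complex_def algebra_simps)
  show "scaleC (a + b) x = scaleC a x + scaleC b x" by (simp add: scaleC_complex_def algebra_simps)
  show "scaleC a (scaleC b x) = scaleC (a * b) x" by (simp add: scaleC_complex_def algebra_simps)
  show "scaleC 1 x = x" by (simp add: scaleC_complex_def)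
  show "scaleR r x = scaleC (complex_of_real r) x" by (simp add: scaleC_complex_def scaleR_conv_of_real)
  show "cinner (x + y) z = cinner x z + cinner y z" by (simp add: cinner_complex_def algebra_simps)
  show "cinner (scaleC a x) y = a * cinner x y" by (simp add: cinner_complex_def scaleC_complex_def algebra_simps)
  show "cinner y x = cnj (cinner x y)" by (simp add: cinner_complex_def mult.commute)
  show "cinner x x = complex_of_real ((norm x)\<^sup>2)" unfolding cinner_complex_def using complex_norm_square[of x] by simp
qed
end

text \<open>The direct sum \<open>H \<oplus> H'\<close> (as the product type, whose norm is
\<open>sqrt (\<parallel>x\<parallel>^2 + \<parallel>y\<parallel>^2)\<close>) is again a complex Hilbert space.\<close>

instantiation prod :: (chilbert, chilbert) chilbert
begin
definition scaleC_prod_def: "scaleC a x = (scaleC a (fst x), scaleC a (snd x))"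
definition cinner_prod_def: "cinner x y = cinner (fst x) (fst y) + cinner (snd x) (snd y)"
instance
proof
  fix a b :: complex and x y z :: "'a \<times> 'b" and r :: real
  show "scaleC a (x + y) = scaleC a x + scaleC a y"
    by (simp add: scaleC_prod_def scaleC_add_right)
  show "scaleC (a + b) x = scaleC a x + scaleC b x"
    by (simp add: scaleC_prod_def scaleC_add_left)
  show "scaleC a (scaleC b x) = scaleC (a * b) x"
    by (simp add: scaleC_prod_def scaleC_scaleC)
  show "scaleC 1 x = x" by (simp add: scaleC_prod_def scaleC_one)
  show "scaleR r x = scaleC (complex_of_real r) x"
    by (simp add: scaleC_prod_def scaleR_scaleC scaleR_prod_def)
  show "cinner (x + y) z = cinner x z + cinner y z"
    by (simp add: cinner_prod_def cinner_add_left)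
  show "cinner (scaleC a x) y = a * cinner x y"
    by (simp add: cinner_prod_def scaleC_prod_def cinner_scaleC_left algebra_simps)
  show "cinner y x = cnj (cinner x y)"
    by (simp add: cinner_prod_def cinner_commute[of "fst x"] cinner_commute[of "snd x"])
  show "cinner x x = complex_of_real ((norm x)\<^sup>2)"
    by (simp add: cinner_prod_def cinner_self norm_prod_def)
qed
end

definition bounded_op :: "('a::chilbert \<Rightarrow> 'b::chilbert) \<Rightarrow> bool" where
  "bounded_op T \<longleftrightarrow> (\<forall>x y. T (x + y) = T x + T y) \<and> (\<forall>a x. T (scaleC a x) = scaleC a (T x))
     \<and> (\<exists>K. \<forall>x. norm (T x) \<le> K * norm x)"

text \<open>Operator norm: the library's \<open>onorm\<close>.  Adjoint \<open>T\<^sup>*\<close>: the unique map with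
\<open>\<langle>T x, y\<rangle> = \<langle>x, T\<^sup>* y\<rangle>\<close> (exists for bounded \<open>T\<close> by Riesz).\<close>

definition adj :: "('a::chilbert \<Rightarrow> 'b::chilbert) \<Rightarrow> ('b \<Rightarrow> 'a)" where
  "adj T = (\<lambda>y. THE z. \<forall>x. cinner (T x) y = cinner x z)"

definition positive_op :: "('a::chilbert \<Rightarrow> 'a) \<Rightarrow> bool" where
  "positive_op P \<longleftrightarrow> bounded_op P \<and> (\<forall>x. cinner (P x) x \<in> \<real> \<and> 0 \<le> Re (cinner (P x) x))"

text \<open>Real powers \<open>P^t\<close> (\<open>t \<ge> 0\<close>) of a positive operator \<open>P\<close> (continuous functional
calculus), written via the norm-convergent binomial series:
\<open>P^t = \<parallel>P\<parallel>^t (I - A)^t = \<parallel>P\<parallel>^t \<Sum>\<^sub>k (t choose k) (-A)^k\<close> with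
\<open>A = I - P/\<parallel>P\<parallel>\<close>, \<open>0 \<le> A \<le> I\<close>.\<close>

definition op_pow :: "('a::chilbert \<Rightarrow> 'a) \<Rightarrow> real \<Rightarrow> ('a \<Rightarrow> 'a)" where
  "op_pow P t =
    (if t = 0 then id
     else if P = (\<lambda>x. 0) then (\<lambda>x. 0)
     else (let A = (\<lambda>x. x - (1 / onorm P) *\<^sub>R P x)
           in (\<lambda>x. (onorm P powr t) *\<^sub>R (\<Sum>k. ((t gchoose k) * (-1) ^ k) *\<^sub>R (A ^^ k) x))))"

definition op_abs :: "('a::chilbert \<Rightarrow> 'a) \<Rightarrow> ('a \<Rightarrow> 'a)" where
  "op_abs T = op_pow (adj T \<circ> T) (1/2)"

definition op_matrix :: "('a::chilbert \<Rightarrow> 'a) \<Rightarrow> ('a \<Rightarrow> 'a) \<Rightarrow> ('a \<Rightarrow> 'a) \<Rightarrow> ('a \<Rightarrow> 'a)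
    \<Rightarrow> ('a \<times> 'a \<Rightarrow> 'a \<times> 'a)" where
  "op_matrix A B C D = (\<lambda>(x1, x2). (A x1 + B x2, C x1 + D x2))"

definition q_numrad :: "complex \<Rightarrow> ('a::chilbert \<Rightarrow> 'a) \<Rightarrow> real" where
  "q_numrad q T = Sup {cmod (cinner (T x) y) | x y. norm x = 1 \<and> norm y = 1 \<and> cinner x y = q}"

end

theory Submission
  imports Defs "HOL-Computational_Algebra.Formal_Power_Series"
begin

lemma scaleC_zero_left[simp]: "scaleC 0 (x::'a::chilbert) = 0"
  using scaleC_add_left[of 0 0 x] by simp

lemma scaleC_zero_right[simp]: "scaleC a (0::'a::chilbert) = 0"
  using scaleC_add_right[of a 0 0] by simp

lemma scaleC_minus_left: "scaleC (- a) (x::'a::chilbert) = - scaleC a x"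
  using scaleC_add_left[of a "-a" x] by (simp add: minus_unique)

lemma scaleC_minus_right: "scaleC a (- x::'a::chilbert) = - scaleC a x"
  using scaleC_add_right[of a x "-x"] by (simp add: minus_unique)

lemma scaleC_diff_right: "scaleC a (x - y::'a::chilbert) = scaleC a x - scaleC a y"
  using scaleC_add_right[of a x "-y"] by (simp add: scaleC_minus_right)

lemma scaleC_diff_left: "scaleC (a - b) (x::'a::chilbert) = scaleC a x - scaleC b x"
  using scaleC_add_left[of a "-b" x] by (simp add: scaleC_minus_left)

lemma scaleC_of_real: "scaleC (complex_of_real r) (x::'a::chilbert) = r *\<^sub>R x"
  by (simp add: scaleR_scaleC)

lemma scaleC_scaleR_comm: "scaleC a (r *\<^sub>R (x::'a::chilbert)) = r *\<^sub>R scaleC a x"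
  by (simp add: scaleR_scaleC scaleC_scaleC mult.commute)

lemma cinner_add_right: "cinner (x::'a::chilbert) (y + z) = cinner x y + cinner x z"
  by (metis cinner_add_left cinner_commute complex_cnj_add)

lemma cinner_scaleC_right: "cinner (x::'a::chilbert) (scaleC a y) = cnj a * cinner x y"
  by (metis cinner_commute cinner_scaleC_left complex_cnj_cnj complex_cnj_mult)

lemma cinner_zero_left[simp]: "cinner (0::'a::chilbert) y = 0"
  using cinner_add_left[of 0 0 y] by simp

lemma cinner_zero_right[simp]: "cinner (x::'a::chilbert) 0 = 0"
  using cinner_add_right[of x 0 0] by simp

lemma cinner_minus_left: "cinner (- x::'a::chilbert) y = - cinner x y"
  using cinner_add_left[of x "-x" y] by (simp add: minus_unique)

lemma cinner_minus_right: "cinner (x::'a::chilbert) (- y) = - cinner x y"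
  using cinner_add_right[of x y "-y"] by (simp add: minus_unique)

lemma cinner_diff_left: "cinner (x - y::'a::chilbert) z = cinner x z - cinner y z"
  using cinner_add_left[of x "-y" z] by (simp add: cinner_minus_left)

lemma cinner_diff_right: "cinner (x::'a::chilbert) (y - z) = cinner x y - cinner x z"
  using cinner_add_right[of x y "-z"] by (simp add: cinner_minus_right)

lemma cinner_scaleR_left: "cinner (r *\<^sub>R x::'a::chilbert) y = of_real r * cinner x y"
  by (simp add: scaleR_scaleC cinner_scaleC_left)

lemma cinner_scaleR_right: "cinner (x::'a::chilbert) (r *\<^sub>R y) = of_real r * cinner x y"
  by (simp add: scaleR_scaleC cinner_scaleC_right)

lemma cinner_self_Re: "Re (cinner x x) = (norm (x::'a::chilbert))\<^sup>2"
  by (simp add: cinner_self)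

lemma cinner_self_Im: "Im (cinner (x::'a::chilbert) x) = 0"
  by (simp add: cinner_self)

lemma norm_scaleC: "norm (scaleC a (x::'a::chilbert)) = cmod a * norm x"
proof -
  have "complex_of_real ((norm (scaleC a x))\<^sup>2) = complex_of_real ((cmod a * norm x)\<^sup>2)"
    unfolding cinner_self[symmetric] cinner_scaleC_left cinner_scaleC_right
    by (simp add: cinner_self power_mult_distrib mult.assoc[symmetric] complex_norm_square[symmetric]
        mult.commute)
  then have "(norm (scaleC a x))\<^sup>2 = (cmod a * norm x)\<^sup>2" by (simp only: of_real_eq_iff)
  then show ?thesis by (simp add: power2_eq_iff_nonneg)
qed

lemma cinner_self_eq_0: "cinner (x::'a::chilbert) x = 0 \<longleftrightarrow> x = 0"
  by (simp add: cinner_self)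

lemma cinner_ext: "(\<And>z. cinner (x::'a::chilbert) z = cinner y z) \<Longrightarrow> x = y"
  by (metis cinner_diff_left cinner_self_eq_0 diff_self eq_iff_diff_eq_0)

lemma norm_add_sq: "(norm (x + y::'a::chilbert))\<^sup>2 = (norm x)\<^sup>2 + (norm y)\<^sup>2 + 2 * Re (cinner x y)"
proof -
  have "Re (cinner (x+y) (x+y)) = Re (cinner x x) + Re (cinner y y) + Re (cinner x y) + Re (cinner y x)"
    by (simp add: cinner_add_left cinner_add_right)
  moreover have "Re (cinner y x) = Re (cinner x y)" by (subst cinner_commute) simp
  ultimately show ?thesis by (simp add: cinner_self_Re)
qed

lemma norm_diff_sq: "(norm (x - y::'a::chilbert))\<^sup>2 = (norm x)\<^sup>2 + (norm y)\<^sup>2 - 2 * Re (cinner x y)"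
  using norm_add_sq[of x "-y"] by (simp add: cinner_minus_right)

section \<open>Cauchy-Schwarz for positive semidefinite hermitian forms\<close>

lemma discr_lemma:
  fixes a b c :: real
  assumes "\<And>l. 0 \<le> a - 2 * l * b + l\<^sup>2 * c" and c: "0 \<le> c"
  shows "b\<^sup>2 \<le> a * c"
proof (cases "c = 0")
  case True
  show ?thesis
  proof (cases "b = 0")
    case False
    have "0 \<le> a - 2 * ((a+1)/(2*b)) * b" using assms(1)[of "(a+1)/(2*b)"] True by simp
    with False show ?thesis by (simp add: field_simps)
  qed (use assms(1)[of 0] True in simp)
next
  case False
  have c0: "c > 0" using c False by simp
  have "0 \<le> a - 2 * (b/c) * b + (b/c)\<^sup>2 * c" by (rule assms(1))
  then have "0 \<le> (a - 2 * (b/c) * b + (b/c)\<^sup>2 * c) * c" using c by simp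
  also have "\<dots> = a * c - b\<^sup>2" using c0 by (simp add: field_simps power2_eq_square)
  finally show ?thesis by simp
qed

lemma form_cs:
  fixes F :: "'a::chilbert \<Rightarrow> 'a \<Rightarrow> complex"
  assumes addl: "\<And>x y z. F (x + y) z = F x z + F y z"
    and scl: "\<And>a x y. F (scaleC a x) y = a * F x y"
    and herm: "\<And>x y. F y x = cnj (F x y)"
    and psd: "\<And>x. 0 \<le> Re (F x x)"
  shows "(cmod (F x y))\<^sup>2 \<le> Re (F x x) * Re (F y y)"
proof -
  have addr: "\<And>x y z. F x (y + z) = F x y + F x z" by (metis addl herm complex_cnj_add)
  have sclr: "\<And>a x y. F x (scaleC a y) = cnj a * F x y" by (metis scl herm complex_cnj_mult complex_cnj_cnj)
  have minl: "\<And>x y. F (- x) y = - F x y" using addl by (metis add.right_inverse add_cancel_right_left eq_neg_iff_add_eq_0 scl mult_zero_left scaleC_zero_left)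
  have minr: "\<And>x y. F x (- y) = - F x y" by (metis minl herm complex_cnj_minus)
  define b where "b = F x y"
  show ?thesis
  proof (cases "b = 0")
    case True then show ?thesis using psd[of x] psd[of y] by (simp add: b_def)
  next
    case False
    define u where "u = b / of_real (cmod b)"
    have u1: "cmod u = 1" using False by (simp add: u_def norm_divide)
    define w where "w = scaleC u y"
    have "cnj b * b = of_real ((cmod b)\<^sup>2)" using complex_norm_square[of b] by (simp add: mult.commute)
    then have Fxw: "F x w = of_real (cmod b)"
      using False by (simp add: w_def sclr u_def b_def[symmetric] complex_cnj_divide power2_eq_square)
    have Fwx: "F w x = of_real (cmod b)" by (metis herm Fxw complex_cnj_complex_of_real)
    have Fww: "F w w = F y y"
      proof -
      have "u * cnj u = 1" using u1 complex_norm_square[of u] by simp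
      then have "cnj u * u = 1" by (metis mult.commute)
      then show ?thesis unfolding w_def scl sclr by (simp add: mult.assoc[symmetric])
    qed
    have "\<And>l::real. 0 \<le> Re (F x x) - 2 * l * cmod b + l\<^sup>2 * Re (F y y)"
    proof -
      fix l :: real
      define v where "v = scaleC (of_real l) w"
      have "F (x + - v) (x + - v) = F x x - F x v - F v x + F v v"
        by (simp only: addl addr minl minr) simp
      also have "\<dots> = F x x - of_real l * F x w - of_real l * F w x + of_real l * (of_real l * F w w)"
        by (simp only: v_def scl sclr complex_cnj_complex_of_real)
      finally have "Re (F (x + - v) (x + - v)) = Re (F x x) - 2 * l * cmod b + l\<^sup>2 * Re (F y y)"
        by (simp add: Fxw Fwx Fww power2_eq_square)
      then show "0 \<le> Re (F x x) - 2 * l * cmod b + l\<^sup>2 * Re (F y y)" using psd by metis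
    qed
    from discr_lemma[OF this psd] show ?thesis by (simp add: b_def)
  qed
qed

lemma cinner_cs: "cmod (cinner x y) \<le> norm (x::'a::chilbert) * norm y"
proof -
  have "(cmod (cinner x y))\<^sup>2 \<le> Re (cinner x x) * Re (cinner y y)"
    by (rule form_cs) (auto simp: cinner_add_left cinner_scaleC_left intro: cinner_commute simp: cinner_self_Re)
  also have "\<dots> = (norm x * norm y)\<^sup>2" by (simp add: cinner_self_Re power_mult_distrib)
  finally show ?thesis by (rule power2_le_imp_le) simp
qed

lemma cinner_ext_right: "(\<And>z. cinner z (x::'a::chilbert) = cinner z y) \<Longrightarrow> x = y"
  by (metis cinner_commute cinner_ext complex_cnj_cnj)

lemma parallelogram: "(norm (a + b::'a::chilbert))\<^sup>2 + (norm (a - b))\<^sup>2 = 2 * (norm a)\<^sup>2 + 2 * (norm b)\<^sup>2"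
  using norm_add_sq[of a b] norm_diff_sq[of a b] by simp

lemma nearest_point:
  fixes C :: "'a::chilbert set"
  assumes "closed C" "convex C" "C \<noteq> {}"
  shows "\<exists>c\<in>C. \<forall>d\<in>C. norm (x - c) \<le> norm (x - d)"
proof -
  define D where "D = (\<lambda>d. norm (x - d)) ` C"
  define \<delta> where "\<delta> = Inf D"
  have bdd: "bdd_below D" unfolding D_def by (rule bdd_belowI[of _ 0]) auto
  have Dne: "D \<noteq> {}" using assms(3) by (simp add: D_def)
  have low: "\<And>d. d \<in> C \<Longrightarrow> \<delta> \<le> norm (x - d)"
    unfolding \<delta>_def D_def by (rule cInf_lower) (use bdd D_def in auto)
  have d0: "0 \<le> \<delta>" unfolding \<delta>_def by (rule cInf_greatest[OF Dne]) (auto simp: D_def)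
  have "\<forall>n. \<exists>c\<in>C. (norm (x - c))\<^sup>2 < \<delta>\<^sup>2 + 1 / (real n + 1)"
  proof
    fix n
    have "\<delta> < sqrt (\<delta>\<^sup>2 + 1 / (real n + 1))"
      by (rule real_less_rsqrt) (simp add: add_pos_nonneg)
    then obtain e where "e \<in> D" "e < sqrt (\<delta>\<^sup>2 + 1 / (real n + 1))"
      using cInf_lessD[OF Dne] unfolding \<delta>_def by blast
    then obtain c where c: "c \<in> C" "norm (x - c) < sqrt (\<delta>\<^sup>2 + 1 / (real n + 1))" unfolding D_def by auto
    then have "(norm (x - c))\<^sup>2 < (sqrt (\<delta>\<^sup>2 + 1 / (real n + 1)))\<^sup>2"
      by (intro power_strict_mono) auto
    then have "(norm (x - c))\<^sup>2 < \<delta>\<^sup>2 + 1 / (real n + 1)"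
      by (simp add: add_nonneg_nonneg)
    with c show "\<exists>c\<in>C. (norm (x - c))\<^sup>2 < \<delta>\<^sup>2 + 1 / (real n + 1)" by blast
  qed
  then obtain c where cC: "\<And>n. c n \<in> C" and cn: "\<And>n. (norm (x - c n))\<^sup>2 < \<delta>\<^sup>2 + 1 / (real n + 1)"
    by metis
  have dist_bound: "(norm (c n - c m))\<^sup>2 \<le> 2 / (real n + 1) + 2 / (real m + 1)" for n m
  proof -
    have mid: "(1/2) *\<^sub>R (c n + c m) \<in> C"
      using convexD[OF assms(2) cC[of n] cC[of m], of "1/2" "1/2"] by (simp add: scaleR_add_right)
    have "x - c n + (x - c m) = 2 *\<^sub>R (x - (1/2) *\<^sub>R (c n + c m))" by (simp add: algebra_simps scaleR_2)
    then have "(norm (x - c n + (x - c m)))\<^sup>2 = 4 * (norm (x - (1/2) *\<^sub>R (c n + c m)))\<^sup>2"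
      by (simp add: power2_eq_square)
    moreover have "\<delta>\<^sup>2 \<le> (norm (x - (1/2) *\<^sub>R (c n + c m)))\<^sup>2"
      using low[OF mid] d0 by (simp add: power_mono)
    moreover have "(norm (x - c n - (x - c m)))\<^sup>2 = (norm (c n - c m))\<^sup>2" by (simp add: norm_minus_commute)
    moreover note parallelogram[of "x - c n" "x - c m"] cn[of n] cn[of m]
    ultimately show ?thesis by linarith
  qed
  have "Cauchy c"
  proof (rule metric_CauchyI)
    fix e :: real assume e: "0 < e"
    obtain N :: nat where N: "4 / e\<^sup>2 < real N" using reals_Archimedean2 by blast
    have "\<forall>m\<ge>N. \<forall>n\<ge>N. dist (c m) (c n) < e"
    proof (intro allI impI)
      fix m n assume mn: "N \<le> m" "N \<le> n"
      have "2 / (real m + 1) \<le> 2 / (real N + 1)" "2 / (real n + 1) \<le> 2 / (real N + 1)"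
        using mn by (auto intro!: divide_left_mono)
      moreover have "4 / (real N + 1) < e\<^sup>2"
      proof -
        have "4 < real N * e\<^sup>2" using N e by (simp add: field_simps)
        also have "\<dots> \<le> (real N + 1) * e\<^sup>2" by (simp add: distrib_right)
        finally show ?thesis by (simp add: field_simps)
      qed
      ultimately have "(norm (c m - c n))\<^sup>2 < e\<^sup>2" using dist_bound[of m n] by linarith
      then show "dist (c m) (c n) < e" using e by (simp add: dist_norm power_less_imp_less_base)
    qed
    then show "\<exists>M. \<forall>m\<ge>M. \<forall>n\<ge>M. dist (c m) (c n) < e" by blast
  qed
  then obtain l where l: "c \<longlonglongrightarrow> l" using Cauchy_convergent_iff convergent_def by blast
  have lC: "l \<in> C" using closed_sequentially[OF assms(1) cC l] .
  have "(\<lambda>n. (norm (x - c n))\<^sup>2) \<longlonglongrightarrow> (norm (x - l))\<^sup>2"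
    by (intro tendsto_intros l)
  moreover have "(\<lambda>n. \<delta>\<^sup>2 + 1 / (real n + 1)) \<longlonglongrightarrow> \<delta>\<^sup>2 + 0"
  proof -
    have "(\<lambda>n. 1 / (real n + 1)) = (\<lambda>n. inverse (real (Suc n)))"
      by (simp add: fun_eq_iff inverse_eq_divide)
    then have "(\<lambda>n. 1 / (real n + 1)) \<longlonglongrightarrow> 0" using LIMSEQ_inverse_real_of_nat by simp
    then show ?thesis by (intro tendsto_intros)
  qed
  moreover have "\<forall>n. (norm (x - c n))\<^sup>2 \<le> \<delta>\<^sup>2 + 1 / (real n + 1)" using cn by (simp add: less_imp_le)
  ultimately have "(norm (x - l))\<^sup>2 \<le> \<delta>\<^sup>2 + 0"
    by (intro LIMSEQ_le) blast+
  then have "norm (x - l) \<le> \<delta>" using power2_le_imp_le[of "norm (x - l)" \<delta>] d0 by simp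
  then show ?thesis using lC low by (meson order_trans)
qed

definition csubspace :: "'a::chilbert set \<Rightarrow> bool" where
  "csubspace M \<longleftrightarrow> 0 \<in> M \<and> (\<forall>x\<in>M. \<forall>y\<in>M. x + y \<in> M) \<and> (\<forall>a. \<forall>x\<in>M. scaleC a x \<in> M)"

lemma closure_add_mem:
  assumes "csubspace M" "y \<in> closure M" "m \<in> M"
  shows "y + m \<in> closure M"
proof -
  obtain f where f: "\<And>n. f n \<in> M" "f \<longlonglongrightarrow> y" using assms(2) unfolding closure_sequential by blast
  have "(\<lambda>n. f n + m) \<longlonglongrightarrow> y + m" by (intro tendsto_intros f)
  moreover have "\<And>n. f n + m \<in> M" using f assms(1,3) unfolding csubspace_def by blast
  ultimately show ?thesis unfolding closure_sequential by (intro exI[where x="\<lambda>n. f n + m"]) auto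
qed

lemma csubspace_convex: "csubspace M \<Longrightarrow> convex M"
  unfolding csubspace_def convex_def by (simp add: scaleR_scaleC)

lemma zero_of_forall_lin:
  fixes r k :: real
  assumes "\<And>l. 0 \<le> - 2 * l * r + l\<^sup>2 * k" "0 \<le> k"
  shows "r = 0"
  using discr_lemma[of 0 r k] assms by simp

lemma orth_projection:
  assumes M: "csubspace M"
  shows "\<exists>x0\<in>closure M. \<forall>m\<in>M. cinner (x - x0) m = 0"
proof -
  have "closed (closure M)" by simp
  moreover have "convex (closure M)" using csubspace_convex[OF M] by (rule convex_closure)
  moreover have "closure M \<noteq> {}" using M unfolding csubspace_def using closure_subset by blast
  ultimately obtain x0 where x0: "x0 \<in> closure M" "\<And>d. d \<in> closure M \<Longrightarrow> norm (x - x0) \<le> norm (x - d)"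
    using nearest_point by blast
  have Re0: "Re (cinner (x - x0) v) = 0" if v: "v \<in> M" for v
  proof (rule zero_of_forall_lin)
    fix l :: real
    have "l *\<^sub>R v \<in> M" using M v unfolding csubspace_def by (metis scaleR_scaleC)
    then have "x0 + l *\<^sub>R v \<in> closure M" using closure_add_mem[OF M x0(1)] by blast
    then have "norm (x - x0) \<le> norm ((x - x0) - l *\<^sub>R v)" using x0(2) by (metis diff_diff_eq)
    then have "(norm (x - x0))\<^sup>2 \<le> (norm ((x - x0) - l *\<^sub>R v))\<^sup>2" by (simp add: power_mono)
    also have "\<dots> = (norm (x - x0))\<^sup>2 + l\<^sup>2 * (norm v)\<^sup>2 - 2 * l * Re (cinner (x - x0) v)"
      by (simp add: norm_diff_sq cinner_scaleR_right power_mult_distrib)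
    finally show "0 \<le> - 2 * l * Re (cinner (x - x0) v) + l\<^sup>2 * (norm v)\<^sup>2" by simp
  qed simp
  have "cinner (x - x0) m = 0" if m: "m \<in> M" for m
  proof -
    have "scaleC \<i> m \<in> M" using M m unfolding csubspace_def by blast
    from Re0[OF this] have "Im (cinner (x - x0) m) = 0" by (simp add: cinner_scaleC_right)
    with Re0[OF m] show ?thesis by (simp add: complex_eq_iff)
  qed
  with x0 show ?thesis by blast
qed

lemma bop_add: "bounded_op T \<Longrightarrow> T (x + y) = T x + T y"
  unfolding bounded_op_def by blast

lemma bop_scaleC: "bounded_op T \<Longrightarrow> T (scaleC a x) = scaleC a (T x)"
  unfolding bounded_op_def by blast

lemma bop_scaleR: "bounded_op T \<Longrightarrow> T (r *\<^sub>R x) = r *\<^sub>R T x"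
  by (simp add: scaleR_scaleC bop_scaleC)

lemma bop_bounded_linear:
  assumes "bounded_op (T::'a::chilbert \<Rightarrow> 'b::chilbert)"
  shows "bounded_linear T"
proof -
  obtain K where K: "\<And>x. norm (T x) \<le> K * norm x" using assms unfolding bounded_op_def by blast
  show ?thesis
    by (rule bounded_linear_intro[where K=K]) (use assms K in \<open>auto simp: bop_add bop_scaleR mult.commute\<close>)
qed

lemma bop_zero: "bounded_op T \<Longrightarrow> T 0 = 0"
  using bop_add[of T 0 0] by simp

lemma bop_minus: "bounded_op T \<Longrightarrow> T (- x) = - T x"
  using bop_add[of T "-x" x] bop_zero[of T] by (simp add: eq_neg_iff_add_eq_0)

lemma bop_diff: "bounded_op T \<Longrightarrow> T (x - y) = T x - T y"
  using bop_add[of T x "-y"] bop_minus[of T y] by simp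

lemma bop_onorm: "bounded_op T \<Longrightarrow> norm (T x) \<le> onorm T * norm x"
  by (rule onorm[OF bop_bounded_linear])

lemma bop_onorm_nonneg: "bounded_op T \<Longrightarrow> 0 \<le> onorm T"
  by (rule onorm_pos_le[OF bop_bounded_linear])

lemma onorm_le':
  fixes f :: "'a::real_normed_vector \<Rightarrow> 'b::real_normed_vector"
  assumes "0 \<le> b" "\<And>x. norm (f x) \<le> b * norm x"
  shows "onorm f \<le> b"
  unfolding onorm_def
proof (rule cSUP_least)
  fix x
  show "norm (f x) / norm x \<le> b"
    using assms(1) assms(2)[of x] by (cases "x = 0") (auto simp: divide_le_eq mult.commute)
qed simp

lemma bounded_op_intro:
  assumes "\<And>x y. T (x + y) = T x + T y" "\<And>a x. T (scaleC a x) = scaleC a (T x)"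
    "\<And>x. norm (T x) \<le> K * norm x"
  shows "bounded_op T"
  unfolding bounded_op_def using assms by blast

lemma bop_comp: "bounded_op S \<Longrightarrow> bounded_op T \<Longrightarrow> bounded_op (S \<circ> T)"
proof -
  assume S: "bounded_op S" and T: "bounded_op T"
  show "bounded_op (S \<circ> T)"
  proof (rule bounded_op_intro[where K="onorm S * onorm T"])
    fix x
    have "norm (S (T x)) \<le> onorm S * norm (T x)" by (rule bop_onorm[OF S])
    also have "\<dots> \<le> onorm S * (onorm T * norm x)"
      by (intro mult_left_mono bop_onorm[OF T] bop_onorm_nonneg[OF S])
    finally show "norm ((S \<circ> T) x) \<le> onorm S * onorm T * norm x" by (simp add: mult.assoc)
  qed (simp_all add: bop_add[OF S] bop_add[OF T] bop_scaleC[OF S] bop_scaleC[OF T])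
qed

lemma onorm_comp_le: "bounded_op S \<Longrightarrow> bounded_op T \<Longrightarrow> onorm (S \<circ> T) \<le> onorm S * onorm T"
  by (rule onorm_compose[OF bop_bounded_linear bop_bounded_linear])

section \<open>Riesz representation\<close>

lemma riesz:
  fixes f :: "'a::chilbert \<Rightarrow> complex"
  assumes add: "\<And>x y. f (x + y) = f x + f y" and scl: "\<And>a x. f (scaleC a x) = a * f x"
    and bnd: "\<And>x. cmod (f x) \<le> K * norm x"
  shows "\<exists>z. \<forall>x. f x = cinner x z"
proof (cases "\<forall>x. f x = 0")
  case True then show ?thesis by (intro exI[of _ 0]) simp
next
  case False
  then obtain x where fx: "f x \<noteq> 0" by blast
  have bl: "bounded_linear f"
    by (rule bounded_linear_intro[where K=K]) (auto simp: add scl[of "of_real _", folded scaleR_scaleC] scaleR_conv_of_real bnd mult.commute)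
  have f0: "f 0 = 0" using bl linear_simps(3) bounded_linear.linear by blast
  define N where "N = {x. f x = 0}"
  have fdiff: "f (u - v) = f u - f v" for u v using bl linear_simps bounded_linear.linear by blast
  have N: "csubspace N" unfolding csubspace_def N_def using f0 add scl by auto
  have "closed N" unfolding N_def
    using bl by (intro closed_Collect_eq continuous_intros) (simp_all add: linear_continuous_on)
  then have cN: "closure N = N" by simp
  obtain x0 where x0: "x0 \<in> N" "\<And>m. m \<in> N \<Longrightarrow> cinner (x - x0) m = 0"
    using orth_projection[OF N, of x] cN by blast
  define u where "u = x - x0"
  have fu: "f u = f x" using x0(1) by (simp add: u_def fdiff N_def)
  have u0: "u \<noteq> 0" using fu fx f0 by auto
  have nu: "(norm u)\<^sup>2 \<noteq> 0" using u0 by simp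
  define z where "z = scaleC (cnj (f u) / of_real ((norm u)\<^sup>2)) u"
  have "f v = cinner v z" for v
  proof -
    have "v - scaleC (f v / f u) u \<in> N"
      unfolding N_def using fu fx by (simp add: fdiff scl)
    then have "cinner u (v - scaleC (f v / f u) u) = 0" using x0(2) u_def by simp
    then have "cinner u v = cnj (f v / f u) * cinner u u"
      by (simp add: cinner_diff_right cinner_scaleC_right)
    then have "cinner v u = (f v / f u) * cinner u u"
      by (metis cinner_commute complex_cnj_cnj complex_cnj_mult)
    then show ?thesis unfolding z_def cinner_scaleC_right
      using fu fx nu by (simp add: cinner_self field_simps)
  qed
  then show ?thesis by blast
qed

section \<open>Adjoint\<close>

lemma adj_exists:
  assumes "bounded_op (T::'a::chilbert \<Rightarrow> 'b::chilbert)"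
  shows "\<exists>z. \<forall>x. cinner (T x) y = cinner x z"
proof (rule riesz)
  fix x
  have "cmod (cinner (T x) y) \<le> norm (T x) * norm y" by (rule cinner_cs)
  also have "\<dots> \<le> onorm T * norm x * norm y"
    by (intro mult_right_mono bop_onorm[OF assms]) simp
  finally show "cmod (cinner (T x) y) \<le> (onorm T * norm y) * norm x" by (simp add: algebra_simps)
qed (simp_all add: bop_add[OF assms] bop_scaleC[OF assms] cinner_add_left cinner_scaleC_left)

lemma adj_prop:
  assumes "bounded_op T"
  shows "cinner (T x) y = cinner x (adj T y)"
proof -
  obtain z where z: "\<forall>x. cinner (T x) y = cinner x z" using adj_exists[OF assms] by blast
  have "\<exists>!z. \<forall>x. cinner (T x) y = cinner x z"
    using z by (intro ex1I[of _ z]) (auto intro: cinner_ext_right)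
  then have "\<forall>x. cinner (T x) y = cinner x (adj T y)"
    unfolding adj_def by (rule theI')
  then show ?thesis by blast
qed

lemma adj_prop': "bounded_op T \<Longrightarrow> cinner (adj T y) x = cinner y (T x)"
  by (metis adj_prop cinner_commute)

lemma adj_unique:
  assumes "bounded_op T" "\<And>x y. cinner (T x) y = cinner x (S y)"
  shows "adj T = S"
proof
  fix y show "adj T y = S y"
    by (rule cinner_ext_right) (metis adj_prop assms)
qed

lemma adj_bop:
  assumes T: "bounded_op T"
  shows "bounded_op (adj T)"
proof (rule bounded_op_intro[where K="onorm T"])
  fix x y show "adj T (x + y) = adj T x + adj T y"
    by (rule cinner_ext_right) (simp add: adj_prop[OF T, symmetric] cinner_add_right)
next
  fix a x show "adj T (scaleC a x) = scaleC a (adj T x)"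
    by (rule cinner_ext_right) (simp add: adj_prop[OF T, symmetric] cinner_scaleC_right)
next
  fix y
  have "(norm (adj T y))\<^sup>2 = Re (cinner (T (adj T y)) y)"
    by (simp add: adj_prop[OF T] cinner_self_Re)
  also have "\<dots> \<le> cmod (cinner (T (adj T y)) y)" by (rule complex_Re_le_cmod)
  also have "\<dots> \<le> norm (T (adj T y)) * norm y" by (rule cinner_cs)
  also have "\<dots> \<le> onorm T * norm (adj T y) * norm y"
    by (intro mult_right_mono bop_onorm[OF T]) simp
  finally have *: "(norm (adj T y))\<^sup>2 \<le> onorm T * norm (adj T y) * norm y" .
  show "norm (adj T y) \<le> onorm T * norm y"
  proof (cases "adj T y = 0")
    case True then show ?thesis using bop_onorm_nonneg[OF T] by simp
  next
    case False
    then have "0 < norm (adj T y)" by simp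
    with * show ?thesis by (simp add: power2_eq_square algebra_simps)
  qed
qed

lemma adj_adj: assumes "bounded_op T" shows "adj (adj T) = T"
  by (rule adj_unique[OF adj_bop[OF assms]]) (simp add: adj_prop'[OF assms])

lemma onorm_adj_sq:
  assumes T: "bounded_op T" and T': "bounded_op T'" and adj: "\<And>x y. cinner (T x) y = cinner x (T' y)"
  shows "(onorm T)\<^sup>2 \<le> onorm (T' \<circ> T)"
proof -
  have TT: "bounded_op (T' \<circ> T)" by (rule bop_comp[OF T' T])
  have n0: "0 \<le> onorm (T' \<circ> T)" by (rule bop_onorm_nonneg[OF TT])
  have "norm (T x) \<le> sqrt (onorm (T' \<circ> T)) * norm x" for x
  proof -
    have "(norm (T x))\<^sup>2 = Re (cinner x (T' (T x)))" by (simp add: adj[symmetric] cinner_self_Re)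
    also have "\<dots> \<le> cmod (cinner x (T' (T x)))" by (rule complex_Re_le_cmod)
    also have "\<dots> \<le> norm x * norm (T' (T x))" by (rule cinner_cs)
    also have "\<dots> \<le> norm x * (onorm (T' \<circ> T) * norm x)"
      using bop_onorm[OF TT, of x] by (intro mult_left_mono) simp_all
    also have "\<dots> = (sqrt (onorm (T' \<circ> T)) * norm x)\<^sup>2" using n0 by (simp add: power2_eq_square)
    finally show ?thesis by (rule power2_le_imp_le) (use n0 in simp)
  qed
  then have "onorm T \<le> sqrt (onorm (T' \<circ> T))" by (rule onorm_le'[rotated]) (simp add: n0)
  then have "(onorm T)\<^sup>2 \<le> (sqrt (onorm (T' \<circ> T)))\<^sup>2"
    using bop_onorm_nonneg[OF T] by (intro power_mono) simp_all
  then show ?thesis using n0 by simp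
qed

lemma onorm_adj_eq:
  fixes T T' :: "'a::chilbert \<Rightarrow> 'a"
  assumes T: "bounded_op T" and T': "bounded_op T'" and adj: "\<And>x y. cinner (T x) y = cinner x (T' y)"
  shows "onorm T' = onorm T" and "onorm (T' \<circ> T) = (onorm T)\<^sup>2"
proof -
  have adj': "\<And>x y. cinner (T' x) y = cinner x (T y)" by (metis adj cinner_commute)
  have le: "onorm S \<le> onorm S'" if S: "bounded_op S" and S': "bounded_op S'"
      and a: "\<And>x y. cinner (S x) y = cinner x (S' y)" for S S' :: "'a \<Rightarrow> 'a"
  proof -
    have "(onorm S)\<^sup>2 \<le> onorm S' * onorm S"
      using onorm_adj_sq[OF S S' a] onorm_comp_le[OF S' S] by linarith
    then show "onorm S \<le> onorm S'" using bop_onorm_nonneg[OF S] bop_onorm_nonneg[OF S']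
      by (cases "onorm S = 0") (auto simp: power2_eq_square)
  qed
  show e: "onorm T' = onorm T"
    using le[OF T T' adj] le[OF T' T adj'] by simp
  show "onorm (T' \<circ> T) = (onorm T)\<^sup>2"
    using onorm_adj_sq[OF T T' adj] onorm_comp_le[OF T' T] e by (simp add: power2_eq_square)
qed

definition pos :: "('a::chilbert \<Rightarrow> 'a) \<Rightarrow> bool" where
  "pos P \<longleftrightarrow> bounded_op P \<and> (\<forall>x y. cinner (P x) y = cinner x (P y)) \<and> (\<forall>x. 0 \<le> Re (cinner (P x) x))"

lemma pos_bop: "pos P \<Longrightarrow> bounded_op P" unfolding pos_def by blast
lemma pos_sa: "pos P \<Longrightarrow> cinner (P x) y = cinner x (P y)" unfolding pos_def by blast
lemma pos_nonneg: "pos P \<Longrightarrow> 0 \<le> Re (cinner (P x) x)" unfolding pos_def by blast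

lemma pos_cs:
  assumes "pos P"
  shows "(cmod (cinner (P x) y))\<^sup>2 \<le> Re (cinner (P x) x) * Re (cinner (P y) y)"
proof (rule form_cs[where F="\<lambda>u v. cinner (P u) v"])
  show "\<And>x y z. cinner (P (x + y)) z = cinner (P x) z + cinner (P y) z"
    by (simp add: bop_add[OF pos_bop[OF assms]] cinner_add_left)
  show "\<And>a x y. cinner (P (scaleC a x)) y = a * cinner (P x) y"
    by (simp add: bop_scaleC[OF pos_bop[OF assms]] cinner_scaleC_left)
  show "\<And>x y. cinner (P y) x = cnj (cinner (P x) y)"
    by (metis pos_sa[OF assms] cinner_commute)
  show "\<And>x. 0 \<le> Re (cinner (P x) x)" by (rule pos_nonneg[OF assms])
qed

lemma sq_le_cancel: "(s::real)\<^sup>2 \<le> c * s \<Longrightarrow> 0 < s \<Longrightarrow> s \<le> c"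
  by (simp add: power2_eq_square)

lemma pos_norm_sq:
  assumes "pos P"
  shows "(norm (P x))\<^sup>2 \<le> onorm P * Re (cinner (P x) x)"
proof -
  have B: "bounded_op P" by (rule pos_bop[OF assms])
  have "((norm (P x))\<^sup>2)\<^sup>2 = (cmod (cinner (P x) (P x)))\<^sup>2" by (simp only: cinner_self norm_of_real) simp
  also have "\<dots> \<le> Re (cinner (P x) x) * Re (cinner (P (P x)) (P x))" by (rule pos_cs[OF assms])
  also have "\<dots> \<le> Re (cinner (P x) x) * (onorm P * (norm (P x))\<^sup>2)"
  proof (rule mult_left_mono)
    have "Re (cinner (P (P x)) (P x)) \<le> cmod (cinner (P (P x)) (P x))" by (rule complex_Re_le_cmod)
    also have "\<dots> \<le> norm (P (P x)) * norm (P x)" by (rule cinner_cs)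
    also have "\<dots> \<le> onorm P * norm (P x) * norm (P x)" by (intro mult_right_mono bop_onorm[OF B]) simp
    finally show "Re (cinner (P (P x)) (P x)) \<le> onorm P * (norm (P x))\<^sup>2" by (simp add: power2_eq_square mult.assoc)
  qed (rule pos_nonneg[OF assms])
  finally have *: "((norm (P x))\<^sup>2)\<^sup>2 \<le> (onorm P * Re (cinner (P x) x)) * (norm (P x))\<^sup>2"
    by (simp add: algebra_simps)
  show ?thesis
  proof (cases "P x = 0")
    case True then show ?thesis using pos_nonneg[OF assms, of x] bop_onorm_nonneg[OF B] by simp
  next
    case False
    then have "0 < (norm (P x))\<^sup>2" by simp
    then show ?thesis by (rule sq_le_cancel[OF *])
  qed
qed

definition Aop :: "('a::chilbert \<Rightarrow> 'a) \<Rightarrow> 'a \<Rightarrow> 'a" where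
  "Aop P = (\<lambda>x. x - (1 / onorm P) *\<^sub>R P x)"

lemma Aop_contr:
  assumes "pos P" "onorm P > 0"
  shows "norm (Aop P x) \<le> norm x"
proof -
  define p where "p = onorm P"
  define r where "r = Re (cinner (P x) x)"
  have p: "p > 0" using assms(2) p_def by simp
  have r: "0 \<le> r" using pos_nonneg[OF assms(1)] r_def by simp
  have n: "(norm (P x))\<^sup>2 \<le> p * r" using pos_norm_sq[OF assms(1)] p_def r_def by simp
  have "(norm (Aop P x))\<^sup>2 = (norm x)\<^sup>2 + (1/p)\<^sup>2 * (norm (P x))\<^sup>2 - 2 * (1/p) * r"
    unfolding Aop_def norm_diff_sq using p
    by (simp add: p_def[symmetric] r_def cinner_scaleR_right power_mult_distrib cinner_commute[of x "P x"] power_divide)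
  also have "\<dots> \<le> (norm x)\<^sup>2 + (1/p)\<^sup>2 * (p * r) - 2 * (1/p) * r"
    using n by (intro diff_right_mono add_left_mono mult_left_mono) simp_all
  also have "\<dots> = (norm x)\<^sup>2 - r / p" using p by (simp add: power2_eq_square field_simps)
  also have "\<dots> \<le> (norm x)\<^sup>2" using p r by simp
  finally show ?thesis by (rule power2_le_imp_le) simp
qed

lemma Aop_bop: assumes B: "bounded_op P" shows "bounded_op (Aop P)"
  unfolding Aop_def
proof (rule bounded_op_intro[where K="1 + \<bar>1 / onorm P\<bar> * onorm P"])
  fix x
  have "norm (x - (1 / onorm P) *\<^sub>R P x) \<le> norm x + \<bar>1 / onorm P\<bar> * norm (P x)"
    using norm_triangle_ineq4[of x "(1 / onorm P) *\<^sub>R P x"] by simp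
  also have "\<dots> \<le> norm x + \<bar>1 / onorm P\<bar> * (onorm P * norm x)"
    by (intro add_left_mono mult_left_mono bop_onorm[OF B]) simp
  finally show "norm (x - (1 / onorm P) *\<^sub>R P x) \<le> (1 + \<bar>1 / onorm P\<bar> * onorm P) * norm x"
    by (simp add: algebra_simps)
qed (auto simp: bop_add[OF B] bop_scaleC[OF B] scaleC_diff_right scaleC_scaleR_comm algebra_simps)

lemma Aop_sa: "pos P \<Longrightarrow> cinner (Aop P x) y = cinner x (Aop P y)"
  unfolding Aop_def by (simp add: cinner_diff_left cinner_diff_right cinner_scaleR_left cinner_scaleR_right pos_sa)

section \<open>Absolute summability of binomial coefficients\<close>

lemma gb_rec: "real (Suc k) * (t gchoose (Suc k)) = (t - real k) * (t gchoose k)"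
  using gbinomial_mult_1[of t k] by (simp add: algebra_simps)

lemma gb_abs_summable:
  assumes t: "0 \<le> (t::real)"
  shows "summable (\<lambda>k. \<bar>t gchoose k\<bar>)"
proof (cases "t = 0")
  case True
  have "summable (\<lambda>k. if k = 0 then (1::real) else 0)" by (rule summable_finite[of "{0}"]) auto
  moreover have "(\<lambda>k. \<bar>t gchoose k\<bar>) = (\<lambda>k. if k = 0 then (1::real) else 0)"
    using True by (auto simp: fun_eq_iff gbinomial_0 gr0_conv_Suc)
  ultimately show ?thesis by simp
next
  case False
  then have tp: "0 < t" using t by simp
  define g where "g k = \<bar>t gchoose k\<bar>" for k
  define a where "a k = real k * g k" for k
  define N where "N = nat \<lceil>t\<rceil>"
  have tele: "t * g k = a k - a (Suc k)" if "N \<le> k" for k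
  proof -
    have "t \<le> real k" using that unfolding N_def by linarith
    have "a (Suc k) = \<bar>real (Suc k) * (t gchoose (Suc k))\<bar>" by (simp add: a_def g_def abs_mult)
    also have "\<dots> = (real k - t) * g k" unfolding gb_rec g_def using \<open>t \<le> real k\<close> by (simp add: abs_mult)
    finally show ?thesis by (simp add: a_def algebra_simps)
  qed
  have g0: "0 \<le> g k" for k by (simp add: g_def)
  have a0: "0 \<le> a k" for k by (simp add: a_def g0)
  have ind: "(\<Sum>k<n. g k) \<le> (\<Sum>k<N. g k) + (a N - a n) / t" if "N \<le> n" for n
    using that
  proof (induction n rule: dec_induct)
    case base then show ?case by simp
  next
    case (step n)
    have "(\<Sum>k<Suc n. g k) = (\<Sum>k<n. g k) + g n" by simp
    also have "g n = (a n - a (Suc n)) / t" using tele[OF step.hyps(1)] tp by (simp add: field_simps)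
    finally show ?case using step.IH by (simp add: diff_divide_distrib)
  qed
  have "(\<Sum>k<n. g k) \<le> (\<Sum>k<N. g k) + a N / t" for n
  proof (cases "N \<le> n")
    case True
    then show ?thesis using ind[OF True] a0[of n] tp by (smt (verit) divide_nonneg_pos diff_divide_distrib)
  next
    case False
    then have "(\<Sum>k<n. g k) \<le> (\<Sum>k<N. g k)" by (intro sum_mono2) (auto simp: g0)
    then show ?thesis using a0[of N] tp by (smt (verit) divide_nonneg_pos)
  qed
  then show ?thesis unfolding g_def[symmetric] by (intro summableI_nonneg_bounded[OF g0])
qed

definition bc :: "real \<Rightarrow> nat \<Rightarrow> real" where
  "bc t k = (t gchoose k) * (-1) ^ k"

lemma bc_abs: "\<bar>bc t k\<bar> = \<bar>t gchoose k\<bar>"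
  by (simp add: bc_def abs_mult)

lemma bc_summable: "0 \<le> t \<Longrightarrow> summable (\<lambda>k. \<bar>bc t k\<bar>)"
  unfolding bc_abs by (rule gb_abs_summable)

lemma bc_vandermonde: "(\<Sum>i\<le>k. bc s i * bc t (k - i)) = bc (s + t) k"
proof -
  have "(\<Sum>i\<le>k. bc s i * bc t (k - i)) = (\<Sum>i\<le>k. ((s gchoose i) * (t gchoose (k - i))) * (-1) ^ k)"
    by (intro sum.cong refl) (simp add: bc_def power_add[symmetric] algebra_simps)
  also have "\<dots> = (\<Sum>i\<in>{0..k}. (s gchoose i) * (t gchoose (k - i))) * (-1) ^ k"
    by (simp add: sum_distrib_right atMost_atLeast0)
  also have "\<dots> = bc (s + t) k" by (simp add: gbinomial_Vandermonde bc_def)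
  finally show ?thesis .
qed

section \<open>Cauchy product for bounded bilinear products\<close>

lemma Cauchy_product_sums_bil:
  fixes a :: "nat \<Rightarrow> 'a::banach" and b :: "nat \<Rightarrow> 'b::banach"
    and prod :: "'a \<Rightarrow> 'b \<Rightarrow> 'c::real_normed_vector"
  assumes bil: "bounded_bilinear prod" and nm: "\<And>x y. norm (prod x y) \<le> norm x * norm y"
  assumes a: "summable (\<lambda>k. norm (a k))"
    and b: "summable (\<lambda>k. norm (b k))"
  shows "(\<lambda>k. \<Sum>i\<le>k. prod (a i) (b (k - i))) sums (prod (\<Sum>k. a k) (\<Sum>k. b k))"
proof -
  interpret P: bounded_bilinear prod by (rule bil)
  let ?S1 = "\<lambda>n::nat. {..<n} \<times> {..<n}"
  let ?S2 = "\<lambda>n::nat. {(i,j). i + j < n}"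
  have S1_mono: "\<And>m n. m \<le> n \<Longrightarrow> ?S1 m \<subseteq> ?S1 n" by auto
  have S2_le_S1: "\<And>n. ?S2 n \<subseteq> ?S1 n" by auto
  have S1_le_S2: "\<And>n. ?S1 (n div 2) \<subseteq> ?S2 n" by auto
  have finite_S1: "\<And>n. finite (?S1 n)" by simp
  with S2_le_S1 have finite_S2: "\<And>n. finite (?S2 n)" by (rule finite_subset)
  let ?g = "\<lambda>(i,j). prod (a i) (b j)"
  let ?f = "\<lambda>(i,j). norm (a i) * norm (b j)"
  have f_nonneg: "\<And>x. 0 \<le> ?f x" by auto
  then have norm_sum_f: "\<And>A. norm (sum ?f A) = sum ?f A"
    unfolding real_norm_def
    by (simp only: abs_of_nonneg sum_nonneg [rule_format])
  have sp: "prod (sum a {..<n}) (sum b {..<n}) = sum ?g (?S1 n)" for n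
    by (simp only: P.sum_left) (simp add: P.sum_right sum.cartesian_product)
  have "(\<lambda>n. prod (\<Sum>k<n. a k) (\<Sum>k<n. b k)) \<longlonglongrightarrow> prod (\<Sum>k. a k) (\<Sum>k. b k)"
    by (intro P.tendsto summable_LIMSEQ summable_norm_cancel [OF a] summable_norm_cancel [OF b])
  then have 1: "(\<lambda>n. sum ?g (?S1 n)) \<longlonglongrightarrow> prod (\<Sum>k. a k) (\<Sum>k. b k)"
    by (simp only: sp)
  have "(\<lambda>n. (\<Sum>k<n. norm (a k)) * (\<Sum>k<n. norm (b k))) \<longlonglongrightarrow> (\<Sum>k. norm (a k)) * (\<Sum>k. norm (b k))"
    using a b by (intro tendsto_mult summable_LIMSEQ)
  then have "(\<lambda>n. sum ?f (?S1 n)) \<longlonglongrightarrow> (\<Sum>k. norm (a k)) * (\<Sum>k. norm (b k))"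
    by (simp only: sum_product sum.Sigma [rule_format] finite_lessThan)
  then have "convergent (\<lambda>n. sum ?f (?S1 n))"
    by (rule convergentI)
  then have Cauchy: "Cauchy (\<lambda>n. sum ?f (?S1 n))"
    by (rule convergent_Cauchy)
  have "Zfun (\<lambda>n. sum ?f (?S1 n - ?S2 n)) sequentially"
  proof (rule ZfunI, simp only: eventually_sequentially norm_sum_f)
    fix r :: real
    assume r: "0 < r"
    from CauchyD [OF Cauchy r] obtain N
      where "\<forall>m\<ge>N. \<forall>n\<ge>N. norm (sum ?f (?S1 m) - sum ?f (?S1 n)) < r" ..
    then have "\<And>m n. N \<le> n \<Longrightarrow> n \<le> m \<Longrightarrow> norm (sum ?f (?S1 m - ?S1 n)) < r"
      by (simp only: sum_diff finite_S1 S1_mono)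
    then have N: "\<And>m n. N \<le> n \<Longrightarrow> n \<le> m \<Longrightarrow> sum ?f (?S1 m - ?S1 n) < r"
      by (simp only: norm_sum_f)
    show "\<exists>N. \<forall>n\<ge>N. sum ?f (?S1 n - ?S2 n) < r"
    proof (intro exI allI impI)
      fix n
      assume "2 * N \<le> n"
      then have n: "N \<le> n div 2" by simp
      have "sum ?f (?S1 n - ?S2 n) \<le> sum ?f (?S1 n - ?S1 (n div 2))"
        by (intro sum_mono2 finite_Diff finite_S1 f_nonneg Diff_mono subset_refl S1_le_S2)
      also have "\<dots> < r"
        using n div_le_dividend by (rule N)
      finally show "sum ?f (?S1 n - ?S2 n) < r" .
    qed
  qed
  then have "Zfun (\<lambda>n. sum ?g (?S1 n - ?S2 n)) sequentially"
    apply (rule Zfun_le [rule_format])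
    apply (simp only: norm_sum_f)
    apply (rule order_trans [OF norm_sum sum_mono])
    apply (auto simp add: nm)
    done
  then have 2: "(\<lambda>n. sum ?g (?S1 n) - sum ?g (?S2 n)) \<longlonglongrightarrow> 0"
    unfolding tendsto_Zfun_iff diff_0_right
    by (simp only: sum_diff finite_S1 S2_le_S1)
  with 1 have "(\<lambda>n. sum ?g (?S2 n)) \<longlonglongrightarrow> prod (\<Sum>k. a k) (\<Sum>k. b k)"
    by (rule Lim_transform2)
  then show ?thesis
    by (simp only: sums_def sum.triangle_reindex)
qed

definition AB :: "('a::chilbert \<Rightarrow> 'a) \<Rightarrow> ('a \<Rightarrow>\<^sub>L 'a)" where
  "AB P = Blinfun (Aop P)"

fun bpow :: "('a::real_normed_vector \<Rightarrow>\<^sub>L 'a) \<Rightarrow> nat \<Rightarrow> ('a \<Rightarrow>\<^sub>L 'a)" where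
  "bpow B 0 = id_blinfun"
| "bpow B (Suc k) = B o\<^sub>L bpow B k"

definition SB :: "('a::chilbert \<Rightarrow> 'a) \<Rightarrow> real \<Rightarrow> ('a \<Rightarrow>\<^sub>L 'a)" where
  "SB P t = (\<Sum>k. bc t k *\<^sub>R bpow (AB P) k)"

lemma AB_apply: "bounded_op P \<Longrightarrow> blinfun_apply (AB P) = Aop P"
  unfolding AB_def by (rule bounded_linear_Blinfun_apply[OF bop_bounded_linear[OF Aop_bop]])

lemma bpow_apply: "bounded_op P \<Longrightarrow> blinfun_apply (bpow (AB P) k) = Aop P ^^ k"
  by (induction k) (auto simp: AB_apply fun_eq_iff)

lemma AB_norm: assumes "pos P" "onorm P > 0" shows "norm (AB P) \<le> 1"
  unfolding norm_blinfun.rep_eq AB_apply[OF pos_bop[OF assms(1)]]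
  by (rule onorm_le') (use Aop_contr[OF assms] in simp_all)

lemma bpow_norm: "norm B \<le> 1 \<Longrightarrow> norm (bpow B k) \<le> 1"
proof (induction k)
  case 0 then show ?case using norm_blinfun_id_le by simp
next
  case (Suc k)
  have "norm (bpow B (Suc k)) \<le> norm B * norm (bpow B k)" by (simp add: norm_blinfun_compose)
  also have "\<dots> \<le> 1" using Suc by (intro mult_le_one) simp_all
  finally show ?case .
qed

lemma bpow_add: "bpow B (i + j) = bpow B i o\<^sub>L bpow B j"
  by (induction i) (auto intro!: blinfun_eqI)

lemma SB_terms_summable:
  assumes "pos P" "onorm P > 0" "0 \<le> t"
  shows "summable (\<lambda>k. norm (bc t k *\<^sub>R bpow (AB P) k))"
proof (rule summable_comparison_test'[OF bc_summable[OF assms(3)]])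
  fix k
  have "norm (bc t k *\<^sub>R bpow (AB P) k) = \<bar>bc t k\<bar> * norm (bpow (AB P) k)" by simp
  also have "\<dots> \<le> \<bar>bc t k\<bar> * 1" by (intro mult_left_mono bpow_norm AB_norm[OF assms(1,2)]) simp
  finally show "norm (norm (bc t k *\<^sub>R bpow (AB P) k)) \<le> \<bar>bc t k\<bar>" by simp
qed

lemma SB_apply:
  assumes "pos P" "onorm P > 0" "0 \<le> t"
  shows "summable (\<lambda>k. bc t k *\<^sub>R (Aop P ^^ k) x)"
    and "blinfun_apply (SB P t) x = (\<Sum>k. bc t k *\<^sub>R (Aop P ^^ k) x)"
proof -
  have s: "summable (\<lambda>k. bc t k *\<^sub>R bpow (AB P) k)"
    by (rule summable_norm_cancel[OF SB_terms_summable[OF assms]])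
  have bl: "bounded_linear (\<lambda>F. blinfun_apply F x)" by simp
  show "summable (\<lambda>k. bc t k *\<^sub>R (Aop P ^^ k) x)"
    using bounded_linear.summable[OF bl s] by (simp add: bpow_apply[OF pos_bop[OF assms(1)]] blinfun.scaleR_left)
  show "blinfun_apply (SB P t) x = (\<Sum>k. bc t k *\<^sub>R (Aop P ^^ k) x)"
    unfolding SB_def using bounded_linear.suminf[OF bl s]
    by (simp add: bpow_apply[OF pos_bop[OF assms(1)]] blinfun.scaleR_left)
qed

lemma compose_scaleR: "(a *\<^sub>R F) o\<^sub>L (b *\<^sub>R G) = (a * b) *\<^sub>R (F o\<^sub>L G)"
  by (auto intro!: blinfun_eqI simp: blinfun.scaleR_left blinfun.scaleR_right)

lemma SB_semigroup:
  assumes "pos P" "onorm P > 0" "0 \<le> s" "0 \<le> t"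
  shows "SB P s o\<^sub>L SB P t = SB P (s + t)"
proof -
  let ?B = "bpow (AB P)"
  have cp: "(\<lambda>k. \<Sum>i\<le>k. (bc s i *\<^sub>R ?B i) o\<^sub>L (bc t (k - i) *\<^sub>R ?B (k - i))) sums (SB P s o\<^sub>L SB P t)"
    unfolding SB_def
    by (rule Cauchy_product_sums_bil[OF bounded_bilinear_blinfun_compose norm_blinfun_compose
          SB_terms_summable[OF assms(1,2,3)] SB_terms_summable[OF assms(1,2,4)]])
  have term_eq: "(\<Sum>i\<le>k. (bc s i *\<^sub>R ?B i) o\<^sub>L (bc t (k - i) *\<^sub>R ?B (k - i))) = bc (s + t) k *\<^sub>R ?B k" for k
  proof -
    have "(\<Sum>i\<le>k. (bc s i *\<^sub>R ?B i) o\<^sub>L (bc t (k - i) *\<^sub>R ?B (k - i))) = (\<Sum>i\<le>k. (bc s i * bc t (k - i)) *\<^sub>R ?B k)"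
    proof (intro sum.cong refl)
      fix i assume "i \<in> {..k}"
      then have ik: "i + (k - i) = k" by simp
      have eq: "?B i o\<^sub>L ?B (k - i) = ?B k" using bpow_add[of "AB P" i "k - i"] unfolding ik by (rule sym)
      show "(bc s i *\<^sub>R ?B i) o\<^sub>L (bc t (k - i) *\<^sub>R ?B (k - i)) = (bc s i * bc t (k - i)) *\<^sub>R ?B k"
        by (simp only: compose_scaleR eq)
    qed
    also have "\<dots> = bc (s + t) k *\<^sub>R ?B k" by (simp only: scaleR_sum_left[symmetric] bc_vandermonde)
    finally show ?thesis .
  qed
  have "(\<lambda>k. bc (s + t) k *\<^sub>R ?B k) sums (SB P s o\<^sub>L SB P t)" using cp unfolding term_eq .
  moreover have "(\<lambda>k. bc (s + t) k *\<^sub>R ?B k) sums SB P (s + t)"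
  proof -
    have st: "0 \<le> s + t" using assms(3,4) by simp
    show ?thesis unfolding SB_def by (rule summable_sums[OF summable_norm_cancel[OF SB_terms_summable[OF assms(1,2) st]]])
  qed
  ultimately show ?thesis by (rule sums_unique2)
qed

lemma onorm_pos_iff:
  assumes B: "bounded_op P" shows "onorm P > 0 \<longleftrightarrow> P \<noteq> (\<lambda>x. 0)"
proof -
  have "onorm P = 0 \<longleftrightarrow> (\<forall>x. P x = 0)" by (rule onorm_eq_0[OF bop_bounded_linear[OF B]])
  moreover have "0 \<le> onorm P" by (rule bop_onorm_nonneg[OF B])
  ultimately show ?thesis by (auto simp: fun_eq_iff)
qed

lemma op_pow_rep:
  assumes "pos P" "onorm P > 0" "0 < t"
  shows "op_pow P t x = onorm P powr t *\<^sub>R blinfun_apply (SB P t) x"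
proof -
  have P0: "P \<noteq> (\<lambda>x. 0)" using assms(2) onorm_pos_iff[OF pos_bop[OF assms(1)]] by simp
  have t0: "t \<noteq> 0" using assms(3) by simp
  have "op_pow P t = (\<lambda>x. onorm P powr t *\<^sub>R (\<Sum>k. bc t k *\<^sub>R (Aop P ^^ k) x))"
    unfolding op_pow_def Let_def bc_def Aop_def using P0 t0 by (simp only: if_False)
  then show ?thesis using SB_apply(2)[OF assms(1,2), of t x] assms(3) by simp
qed

lemma op_pow_zero_op: "t \<noteq> 0 \<Longrightarrow> op_pow (\<lambda>x. 0) t = (\<lambda>x. 0)"
  by (simp add: op_pow_def)

lemma op_pow_0: "op_pow P 0 = id"
  by (simp add: op_pow_def)

lemma bl_scaleC: "bounded_linear (\<lambda>v::'a::chilbert. scaleC a v)"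
  by (rule bounded_linear_intro[where K="cmod a"]) (simp_all add: scaleC_add_right scaleC_scaleR_comm norm_scaleC mult.commute)

lemma bl_cinner_left: "bounded_linear (\<lambda>v::'a::chilbert. cinner v y)"
  by (rule bounded_linear_intro[where K="norm y"])
     (simp_all add: cinner_add_left cinner_scaleR_left scaleR_conv_of_real cinner_cs)

lemma bl_cinner_right: "bounded_linear (\<lambda>v::'a::chilbert. cinner x v)"
proof (rule bounded_linear_intro[where K="norm x"])
  fix v show "norm (cinner x v) \<le> norm v * norm x" using cinner_cs[of x v] by (simp add: mult.commute)
qed (simp_all add: cinner_add_right cinner_scaleR_right scaleR_conv_of_real)

lemma bop_id: "bounded_op (id::'a::chilbert \<Rightarrow> 'a)"
  by (rule bounded_op_intro[where K=1]) simp_all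

lemma bop_zero_op: "bounded_op (\<lambda>x::'a::chilbert. 0::'a)"
  by (rule bounded_op_intro[where K=0]) simp_all

lemma Aop_pow_scaleC: "bounded_op P \<Longrightarrow> (Aop P ^^ k) (scaleC a x) = scaleC a ((Aop P ^^ k) x)"
  by (induction k) (simp_all add: bop_scaleC[OF Aop_bop])

lemma Aop_pow_sa: "pos P \<Longrightarrow> cinner ((Aop P ^^ k) x) y = cinner x ((Aop P ^^ k) y)"
proof (induction k arbitrary: y)
  case 0 then show ?case by simp
next
  case (Suc k)
  have "cinner ((Aop P ^^ Suc k) x) y = cinner ((Aop P ^^ k) x) (Aop P y)"
    by (simp add: Aop_sa[OF Suc.prems])
  also have "\<dots> = cinner x ((Aop P ^^ k) (Aop P y))" by (rule Suc.IH[OF Suc.prems])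
  also have "\<dots> = cinner x ((Aop P ^^ Suc k) y)" by (simp only: funpow_Suc_right comp_def)
  finally show ?case .
qed

lemma SB_scaleC:
  assumes "pos P" "onorm P > 0" "0 \<le> t"
  shows "blinfun_apply (SB P t) (scaleC a x) = scaleC a (blinfun_apply (SB P t) x)"
proof -
  have "scaleC a (blinfun_apply (SB P t) x) = (\<Sum>k. scaleC a (bc t k *\<^sub>R (Aop P ^^ k) x))"
    unfolding SB_apply(2)[OF assms] by (rule bounded_linear.suminf[OF bl_scaleC SB_apply(1)[OF assms]])
  also have "\<dots> = (\<Sum>k. bc t k *\<^sub>R (Aop P ^^ k) (scaleC a x))"
    by (simp add: scaleC_scaleR_comm Aop_pow_scaleC[OF pos_bop[OF assms(1)]])
  also have "\<dots> = blinfun_apply (SB P t) (scaleC a x)" by (rule SB_apply(2)[OF assms, symmetric])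
  finally show ?thesis by simp
qed

lemma SB_sa:
  assumes "pos P" "onorm P > 0" "0 \<le> t"
  shows "cinner (blinfun_apply (SB P t) x) y = cinner x (blinfun_apply (SB P t) y)"
proof -
  have "cinner (blinfun_apply (SB P t) x) y = (\<Sum>k. cinner (bc t k *\<^sub>R (Aop P ^^ k) x) y)"
    unfolding SB_apply(2)[OF assms] by (rule bounded_linear.suminf[OF bl_cinner_left SB_apply(1)[OF assms]])
  also have "\<dots> = (\<Sum>k. cinner x (bc t k *\<^sub>R (Aop P ^^ k) y))"
    by (simp add: cinner_scaleR_left cinner_scaleR_right Aop_pow_sa[OF assms(1)])
  also have "\<dots> = cinner x (blinfun_apply (SB P t) y)"
    unfolding SB_apply(2)[OF assms] by (rule bounded_linear.suminf[OF bl_cinner_right SB_apply(1)[OF assms], symmetric])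
  finally show ?thesis .
qed

lemma op_pow_bop:
  assumes P: "pos P" and t: "0 \<le> t"
  shows "bounded_op (op_pow P t)"
proof (cases "t = 0")
  case True then show ?thesis by (simp add: op_pow_0 bop_id)
next
  case tn: False
  show ?thesis
  proof (cases "onorm P > 0")
    case False
    then have "P = (\<lambda>x. 0)" using onorm_pos_iff[OF pos_bop[OF P]] by simp
    then show ?thesis using tn by (simp add: op_pow_zero_op bop_zero_op)
  next
    case True
    have tp: "0 < t" using t tn by simp
    let ?c = "onorm P powr t"
    show ?thesis
    proof (rule bounded_op_intro[where K="\<bar>?c\<bar> * norm (SB P t)"])
      fix x y show "op_pow P t (x + y) = op_pow P t x + op_pow P t y"
        by (simp add: op_pow_rep[OF P True tp] blinfun.add_right scaleR_add_right)
    next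
      fix a x show "op_pow P t (scaleC a x) = scaleC a (op_pow P t x)"
        by (simp add: op_pow_rep[OF P True tp] SB_scaleC[OF P True t] scaleC_scaleR_comm)
    next
      fix x
      have "norm (op_pow P t x) = \<bar>?c\<bar> * norm (blinfun_apply (SB P t) x)"
        by (simp add: op_pow_rep[OF P True tp])
      also have "\<dots> \<le> \<bar>?c\<bar> * (norm (SB P t) * norm x)" by (intro mult_left_mono norm_blinfun) simp
      finally show "norm (op_pow P t x) \<le> \<bar>?c\<bar> * norm (SB P t) * norm x" by (simp add: mult.assoc)
    qed
  qed
qed

lemma op_pow_sa:
  assumes P: "pos P" and t: "0 \<le> t"
  shows "cinner (op_pow P t x) y = cinner x (op_pow P t y)"
proof (cases "t = 0")
  case True then show ?thesis by (simp add: op_pow_0)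
next
  case tn: False
  show ?thesis
  proof (cases "onorm P > 0")
    case False
    then have "P = (\<lambda>x. 0)" using onorm_pos_iff[OF pos_bop[OF P]] by simp
    then show ?thesis using tn by (simp add: op_pow_zero_op)
  next
    case True
    have tp: "0 < t" using t tn by simp
    show ?thesis
      by (simp add: op_pow_rep[OF P True tp] cinner_scaleR_left cinner_scaleR_right SB_sa[OF P True t])
  qed
qed

lemma op_pow_semigroup:
  assumes P: "pos P" and s: "0 \<le> s" and t: "0 \<le> t"
  shows "op_pow P s (op_pow P t x) = op_pow P (s + t) x"
proof (cases "s = 0 \<or> t = 0")
  case True then show ?thesis by (auto simp: op_pow_0)
next
  case False
  then have sp: "0 < s" and tp: "0 < t" and stp: "0 < s + t" using s t by auto
  show ?thesis
  proof (cases "onorm P > 0")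
    case False
    then have "P = (\<lambda>x. 0)" using onorm_pos_iff[OF pos_bop[OF P]] by simp
    then show ?thesis using sp tp stp by (simp add: op_pow_zero_op)
  next
    case True
    have "op_pow P s (op_pow P t x) = (onorm P powr s * onorm P powr t) *\<^sub>R blinfun_apply (SB P s o\<^sub>L SB P t) x"
      by (simp add: op_pow_rep[OF P True sp] op_pow_rep[OF P True tp] blinfun.scaleR_right)
    also have "\<dots> = op_pow P (s + t) x"
      by (simp add: SB_semigroup[OF P True s t] op_pow_rep[OF P True stp] powr_add)
    finally show ?thesis .
  qed
qed

lemma op_pow_one:
  assumes B: "bounded_op P"
  shows "op_pow P 1 = P"
proof (cases "P = (\<lambda>x. 0)")
  case True then show ?thesis by (simp add: op_pow_zero_op)
next
  case False
  have p: "onorm P > 0" using False onorm_pos_iff[OF B] by simp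
  have c: "((1::real) gchoose k) * (-1) ^ k = (if k = 0 then 1 else if k = 1 then -1 else 0)" for k
  proof -
    have "real (1 choose k) = ((1::real) gchoose k)" using binomial_gbinomial[of 1 k, where 'a=real] by simp
    then have "((1::real) gchoose k) = real (1 choose k)" by simp
    then show ?thesis by (cases k) (auto simp: binomial_eq_0 gr0_conv_Suc)
  qed
  have "(\<Sum>k. (((1::real) gchoose k) * (-1) ^ k) *\<^sub>R (Aop P ^^ k) x) =
        (\<Sum>k\<in>{0,1}. (((1::real) gchoose k) * (-1) ^ k) *\<^sub>R (Aop P ^^ k) x)" for x
    by (rule suminf_finite) (auto simp: c)
  then have "op_pow P 1 x = P x" for x
    using False p unfolding op_pow_def Let_def Aop_def[symmetric]
    by (simp add: c Aop_def)
  then show ?thesis by auto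
qed

lemma Aop_intertwine:
  assumes X: "bounded_op X" and XP: "\<And>x. X (P x) = Q (X x)" and pq: "onorm P = onorm Q"
  shows "X ((Aop P ^^ k) x) = (Aop Q ^^ k) (X x)"
proof (induction k)
  case (Suc k)
  have one: "X (Aop P y) = Aop Q (X y)" for y
    by (simp add: Aop_def bop_diff[OF X] bop_scaleR[OF X] XP pq)
  show ?case by (simp add: one Suc)
qed simp

lemma op_pow_intertwine:
  assumes X: "bounded_op X" and P: "pos P" and Q: "pos Q" and XP: "\<And>x. X (P x) = Q (X x)"
    and pq: "onorm P = onorm Q" and t: "0 \<le> t"
  shows "X (op_pow P t x) = op_pow Q t (X x)"
proof (cases "t = 0")
  case True then show ?thesis by (simp add: op_pow_0)
next
  case tn: False
  have tp: "0 < t" using t tn by simp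
  show ?thesis
  proof (cases "onorm P > 0")
    case False
    then have "P = (\<lambda>x. 0)" "Q = (\<lambda>x. 0)"
      using onorm_pos_iff[OF pos_bop[OF P]] onorm_pos_iff[OF pos_bop[OF Q]] pq by simp_all
    then show ?thesis using tn by (simp add: op_pow_zero_op bop_zero[OF X])
  next
    case True
    have Qp: "onorm Q > 0" using True pq by simp
    have "X (op_pow P t x) = onorm P powr t *\<^sub>R X (\<Sum>k. bc t k *\<^sub>R (Aop P ^^ k) x)"
      unfolding op_pow_rep[OF P True tp] SB_apply(2)[OF P True t] by (rule bop_scaleR[OF X])
    also have "X (\<Sum>k. bc t k *\<^sub>R (Aop P ^^ k) x) = (\<Sum>k. X (bc t k *\<^sub>R (Aop P ^^ k) x))"
      by (rule bounded_linear.suminf[OF bop_bounded_linear[OF X] SB_apply(1)[OF P True t]])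
    also have "\<dots> = (\<Sum>k. bc t k *\<^sub>R (Aop Q ^^ k) (X x))"
      by (simp add: bop_scaleR[OF X] Aop_intertwine[OF X XP pq])
    also have "onorm P powr t *\<^sub>R \<dots> = op_pow Q t (X x)"
      unfolding op_pow_rep[OF Q Qp tp] SB_apply(2)[OF Q Qp t] pq ..
    finally show ?thesis .
  qed
qed

lemma op_pow_pos:
  assumes P: "pos P" and t: "0 \<le> t"
  shows "pos (op_pow P t)"
  unfolding pos_def
proof (intro conjI allI)
  show "bounded_op (op_pow P t)" by (rule op_pow_bop[OF P t])
  fix x y show "cinner (op_pow P t x) y = cinner x (op_pow P t y)" by (rule op_pow_sa[OF P t])
next
  fix x
  have h: "0 \<le> t / 2" using t by simp
  have e: "t/2 + t/2 = t" by simp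
  have "cinner (op_pow P t x) x = cinner (op_pow P (t/2) (op_pow P (t/2) x)) x"
    using op_pow_semigroup[OF P h h, of x] unfolding e by (rule arg_cong[where f="\<lambda>v. cinner v x", symmetric])
  also have "\<dots> = cinner (op_pow P (t/2) x) (op_pow P (t/2) x)" by (rule op_pow_sa[OF P h])
  finally show "0 \<le> Re (cinner (op_pow P t x) x)" by (simp add: cinner_self_Re)
qed

lemma op_pow_norm_sq:
  assumes P: "pos P" and t: "0 \<le> t"
  shows "(norm (op_pow P t x))\<^sup>2 = Re (cinner (op_pow P (2 * t) x) x)"
proof -
  have e: "t + t = 2 * t" by simp
  have "cinner (op_pow P (2 * t) x) x = cinner (op_pow P t (op_pow P t x)) x"
    using op_pow_semigroup[OF P t t, of x] unfolding e by (rule arg_cong[where f="\<lambda>v. cinner v x", symmetric])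
  also have "\<dots> = cinner (op_pow P t x) (op_pow P t x)" by (rule op_pow_sa[OF P t])
  finally show ?thesis by (simp add: cinner_self_Re)
qed

lemma adjcomp_pos:
  fixes X :: "'a::chilbert \<Rightarrow> 'a"
  assumes X: "bounded_op X"
  shows "pos (adj X \<circ> X)"
  unfolding pos_def
proof (intro conjI allI)
  show "bounded_op (adj X \<circ> X)" by (rule bop_comp[OF adj_bop[OF X] X])
  fix x y show "cinner ((adj X \<circ> X) x) y = cinner x ((adj X \<circ> X) y)"
    by (simp add: adj_prop[OF X, symmetric] adj_prop'[OF X])
next
  fix x show "0 \<le> Re (cinner ((adj X \<circ> X) x) x)"
    by (simp add: adj_prop'[OF X] cinner_self_Re)
qed

lemma onorm_adjcomp:
  fixes X :: "'a::chilbert \<Rightarrow> 'a"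
  assumes X: "bounded_op X" shows "onorm (adj X \<circ> X) = (onorm X)\<^sup>2"
  by (rule onorm_adj_eq(2)[OF X adj_bop[OF X]]) (rule adj_prop[OF X])

lemma onorm_adj:
  fixes X :: "'a::chilbert \<Rightarrow> 'a"
  assumes X: "bounded_op X" shows "onorm (adj X) = onorm X"
  by (rule onorm_adj_eq(1)[OF X adj_bop[OF X]]) (rule adj_prop[OF X])

lemma op_abs_pos: "bounded_op (X::'a::chilbert\<Rightarrow>'a) \<Longrightarrow> pos (op_abs X)"
  unfolding op_abs_def by (rule op_pow_pos[OF adjcomp_pos]) simp_all

lemma op_abs_sq: "bounded_op (X::'a::chilbert\<Rightarrow>'a) \<Longrightarrow> op_abs X (op_abs X x) = adj X (X x)"
proof -
  assume X: "bounded_op X"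
  have h: "(0::real) \<le> 1/2" by simp
  have "op_abs X (op_abs X x) = op_pow (adj X \<circ> X) (1/2 + 1/2) x"
    unfolding op_abs_def by (rule op_pow_semigroup[OF adjcomp_pos[OF X] h h])
  also have "\<dots> = (adj X \<circ> X) x"
    using op_pow_one[OF pos_bop[OF adjcomp_pos[OF X]]] by simp
  finally show ?thesis by simp
qed

lemma op_abs_norm:
  fixes X :: "'a::chilbert \<Rightarrow> 'a"
  assumes X: "bounded_op X" shows "norm (X x) = norm (op_abs X x)"
proof -
  have "(norm (X x))\<^sup>2 = Re (cinner (adj X (X x)) x)" by (simp add: adj_prop'[OF X] cinner_self_Re)
  also have "\<dots> = Re (cinner (op_abs X (op_abs X x)) x)" by (simp add: op_abs_sq[OF X])
  also have "\<dots> = (norm (op_abs X x))\<^sup>2"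
    using pos_sa[OF op_abs_pos[OF X], of "op_abs X x" x] by (simp add: cinner_self_Re)
  finally show ?thesis by (simp add: power2_eq_iff_nonneg)
qed

lemma onorm_op_abs:
  fixes X :: "'a::chilbert \<Rightarrow> 'a"
  assumes X: "bounded_op X" shows "onorm (op_abs X) = onorm X"
proof -
  have R: "pos (op_abs X)" by (rule op_abs_pos[OF X])
  have "(onorm (op_abs X))\<^sup>2 = onorm (op_abs X \<circ> op_abs X)"
    by (rule onorm_adj_eq(2)[OF pos_bop[OF R] pos_bop[OF R], symmetric]) (rule pos_sa[OF R])
  also have "op_abs X \<circ> op_abs X = adj X \<circ> X" by (auto simp: op_abs_sq[OF X])
  also have "onorm \<dots> = (onorm X)\<^sup>2" by (rule onorm_adjcomp[OF X])
  finally show ?thesis using bop_onorm_nonneg[OF pos_bop[OF R]] bop_onorm_nonneg[OF X]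
    by (simp add: power2_eq_iff_nonneg)
qed

lemma op_abs_adj_def: "bounded_op (X::'a::chilbert\<Rightarrow>'a) \<Longrightarrow> op_abs (adj X) = op_pow (X \<circ> adj X) (1/2)"
  unfolding op_abs_def by (simp add: adj_adj)

lemma op_abs_intertwine1:
  fixes X :: "'a::chilbert \<Rightarrow> 'a"
  assumes X: "bounded_op X"
  shows "X (op_abs X x) = op_abs (adj X) (X x)"
proof -
  have Q: "pos (adj (adj X) \<circ> adj X)" by (rule adjcomp_pos[OF adj_bop[OF X]])
  show ?thesis
    unfolding op_abs_def
  proof (rule op_pow_intertwine[OF X adjcomp_pos[OF X] Q])
    show "\<And>x. X ((adj X \<circ> X) x) = (adj (adj X) \<circ> adj X) (X x)" by (simp add: adj_adj[OF X])
    show "onorm (adj X \<circ> X) = onorm (adj (adj X) \<circ> adj X)"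
      by (simp add: onorm_adjcomp[OF X] onorm_adjcomp[OF adj_bop[OF X]] onorm_adj[OF X])
  qed simp
qed

lemma op_abs_intertwine:
  fixes X :: "'a::chilbert \<Rightarrow> 'a"
  assumes X: "bounded_op X" and t: "0 \<le> t"
  shows "X (op_pow (op_abs X) t x) = op_pow (op_abs (adj X)) t (X x)"
proof (rule op_pow_intertwine[OF X op_abs_pos[OF X] op_abs_pos[OF adj_bop[OF X]] _ _ t])
  show "\<And>x. X (op_abs X x) = op_abs (adj X) (X x)" by (rule op_abs_intertwine1[OF X])
  show "onorm (op_abs X) = onorm (op_abs (adj X))"
    by (simp add: onorm_op_abs[OF X] onorm_op_abs[OF adj_bop[OF X]] onorm_adj[OF X])
qed

lemma op_pow_halve:
  assumes R: "pos R" and u: "0 \<le> u" and z: "op_pow R u v = 0"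
  shows "op_pow R (u / 2) v = 0"
proof -
  have h: "0 \<le> u / 2" using u by simp
  have "(norm (op_pow R (u / 2) v))\<^sup>2 = Re (cinner (op_pow R (2 * (u / 2)) v) v)"
    by (rule op_pow_norm_sq[OF R h])
  also have "2 * (u / 2) = u" by simp
  finally show ?thesis using z by simp
qed

lemma op_pow_halve_n:
  assumes R: "pos R" and u: "0 \<le> u" and z: "op_pow R u v = 0"
  shows "op_pow R (u / 2 ^ n) v = 0"
proof (induction n)
  case 0 then show ?case using z by simp
next
  case (Suc n)
  have e: "u / 2 ^ Suc n = (u / 2 ^ n) / 2" by simp
  show ?case unfolding e by (rule op_pow_halve[OF R _ Suc]) (use u in simp)
qed

lemma op_pow_kernel:
  assumes R: "pos R" and u: "0 < u" and g: "0 < g" and z: "op_pow R u v = 0"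
  shows "op_pow R g v = 0"
proof -
  obtain n where n: "u / g < 2 ^ n" using real_arch_pow[of 2 "u / g"] by auto
  then have lt: "u / 2 ^ n < g" using g by (simp add: field_simps)
  have z2: "op_pow R (u / 2 ^ n) v = 0" by (rule op_pow_halve_n[OF R _ z]) (use u in simp)
  have "op_pow R g v = op_pow R (g - u / 2 ^ n) (op_pow R (u / 2 ^ n) v)"
    using op_pow_semigroup[OF R, of "g - u / 2 ^ n" "u / 2 ^ n" v] lt u by simp
  also have "\<dots> = 0" unfolding z2 by (rule bop_zero[OF op_pow_bop[OF R]]) (use lt in simp)
  finally show ?thesis .
qed

lemma mixed_schwarz:
  fixes X :: "'a::chilbert \<Rightarrow> 'a"
  assumes X: "bounded_op X" and g0: "0 \<le> g" and g1: "g \<le> 1"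
  shows "cmod (cinner (X x) y) \<le> norm (op_pow (op_abs X) g x) * norm (op_pow (op_abs (adj X)) (1 - g) y)"
proof -
  define R where "R = op_abs X"
  define S where "S = op_abs (adj X)"
  have Rp: "pos R" unfolding R_def by (rule op_abs_pos[OF X])
  have Sp: "pos S" unfolding S_def by (rule op_abs_pos[OF adj_bop[OF X]])
  have nX: "norm (X w) = norm (R w)" for w unfolding R_def by (rule op_abs_norm[OF X])
  have nXa: "norm (adj X w) = norm (S w)" for w unfolding S_def by (rule op_abs_norm[OF adj_bop[OF X]])
  consider "g = 0" | "g = 1" | "0 < g" "g < 1" using g0 g1 by linarith
  then show ?thesis
  proof cases
    case 1
    have "cmod (cinner (X x) y) = cmod (cinner x (adj X y))" by (simp add: adj_prop[OF X])
    also have "\<dots> \<le> norm x * norm (adj X y)" by (rule cinner_cs)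
    finally show ?thesis using 1 by (simp add: op_pow_0 op_pow_one[OF pos_bop[OF Sp]] nXa S_def[symmetric] R_def[symmetric])
  next
    case 2
    have "cmod (cinner (X x) y) \<le> norm (X x) * norm y" by (rule cinner_cs)
    then show ?thesis using 2 by (simp add: op_pow_0 op_pow_one[OF pos_bop[OF Rp]] nX S_def[symmetric] R_def[symmetric])
  next
    case 3
    define s where "s = 1 - g"
    have s0: "0 < s" "0 \<le> s" using 3 by (simp_all add: s_def)
    have gs: "g + s = 1" by (simp add: s_def)
    have g0': "0 \<le> g" using 3 by simp
    let ?Rs = "op_pow R s" and ?Rg = "op_pow R g" and ?Ss = "op_pow S s"
    have Rsb: "bounded_op ?Rs" by (rule op_pow_bop[OF Rp s0(2)])
    have Rgb: "bounded_op ?Rg" by (rule op_pow_bop[OF Rp g0'])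
    define M where "M = range ?Rs"
    have M: "csubspace M" unfolding csubspace_def M_def
    proof (intro conjI ballI allI)
      show "0 \<in> range ?Rs" using bop_zero[OF Rsb] by (metis rangeI)
      fix a b assume "a \<in> range ?Rs" "b \<in> range ?Rs"
      then show "a + b \<in> range ?Rs" by (auto simp: bop_add[OF Rsb, symmetric])
    next
      fix c a assume "a \<in> range ?Rs"
      then show "scaleC c a \<in> range ?Rs" by (auto simp: bop_scaleC[OF Rsb, symmetric])
    qed
    have A: "cmod (cinner (X z) y) \<le> norm (?Rg z) * norm (?Ss y)" if zM: "z \<in> M" for z
    proof -
      obtain w where w: "z = ?Rs w" using zM unfolding M_def by blast
      have "X z = ?Ss (X w)" unfolding w R_def S_def by (rule op_abs_intertwine[OF X s0(2)])
      then have "cinner (X z) y = cinner (X w) (?Ss y)" by (simp add: op_pow_sa[OF Sp s0(2)])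
      then have "cmod (cinner (X z) y) \<le> norm (X w) * norm (?Ss y)" using cinner_cs by metis
      also have "norm (X w) = norm (R w)" by (rule nX)
      also have "R w = ?Rg z"
        unfolding w op_pow_semigroup[OF Rp g0' s0(2)] gs op_pow_one[OF pos_bop[OF Rp]] ..
      finally show ?thesis .
    qed
    obtain x0 where x0: "x0 \<in> closure M" and orth: "\<And>m. m \<in> M \<Longrightarrow> cinner (x - x0) m = 0"
      using orth_projection[OF M, of x] by blast
    have B: "cmod (cinner (X x0) y) \<le> norm (?Rg x0) * norm (?Ss y)"
    proof -
      obtain f where f: "\<And>n. f n \<in> M" "f \<longlonglongrightarrow> x0" using x0 unfolding closure_sequential by blast
      have "(\<lambda>n. cmod (cinner (X (f n)) y)) \<longlonglongrightarrow> cmod (cinner (X x0) y)"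
        by (intro tendsto_norm bounded_linear.tendsto[OF bl_cinner_left]
            bounded_linear.tendsto[OF bop_bounded_linear[OF X]] f(2))
      moreover have "(\<lambda>n. norm (?Rg (f n)) * norm (?Ss y)) \<longlonglongrightarrow> norm (?Rg x0) * norm (?Ss y)"
        by (intro tendsto_mult tendsto_const tendsto_norm bounded_linear.tendsto[OF bop_bounded_linear[OF Rgb]] f(2))
      moreover have "\<forall>n. cmod (cinner (X (f n)) y) \<le> norm (?Rg (f n)) * norm (?Ss y)"
        using A f(1) by blast
      ultimately show ?thesis by (intro LIMSEQ_le) blast+
    qed
    define x1 where "x1 = x - x0"
    have Rs1: "?Rs x1 = 0"
    proof -
      have "?Rs (?Rs x1) \<in> M" unfolding M_def by blast
      then have "cinner x1 (?Rs (?Rs x1)) = 0" using orth x1_def by blast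
      then have "cinner (?Rs x1) (?Rs x1) = 0" by (simp add: op_pow_sa[OF Rp s0(2)])
      then show ?thesis by (simp add: cinner_self_eq_0)
    qed
    have Rg1: "?Rg x1 = 0" by (rule op_pow_kernel[OF Rp s0(1) 3(1) Rs1])
    have "R x1 = ?Rg (?Rs x1)"
      unfolding op_pow_semigroup[OF Rp g0' s0(2)] gs op_pow_one[OF pos_bop[OF Rp]] ..
    then have "R x1 = 0" using Rs1 bop_zero[OF Rgb] by simp
    then have X1: "X x1 = 0" using nX[of x1] by simp
    have xs: "x = x0 + x1" by (simp add: x1_def)
    have "X x = X x0" unfolding xs bop_add[OF X] X1 by simp
    moreover have "?Rg x = ?Rg x0" unfolding xs bop_add[OF Rgb] Rg1 by simp
    ultimately show ?thesis using B by (simp add: R_def S_def s_def)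
  qed
qed

lemma mixed_schwarz2:
  fixes X :: "'a::chilbert \<Rightarrow> 'a"
  assumes X: "bounded_op X" and g0: "0 \<le> g" and g1: "g \<le> 1"
  shows "cmod (cinner (X x) y) \<le> sqrt (Re (cinner (op_pow (op_abs X) (2 * g) x) x))
                                  * sqrt (Re (cinner (op_pow (op_abs (adj X)) (2 * (1 - g)) y) y))"
proof -
  have a: "norm (op_pow (op_abs X) g x) = sqrt (Re (cinner (op_pow (op_abs X) (2 * g) x) x))"
    using op_pow_norm_sq[OF op_abs_pos[OF X] g0, of x] by (metis norm_ge_zero real_sqrt_unique)
  have g1': "0 \<le> 1 - g" using g1 by simp
  have b: "norm (op_pow (op_abs (adj X)) (1 - g) y) = sqrt (Re (cinner (op_pow (op_abs (adj X)) (2 * (1 - g)) y) y))"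
    using op_pow_norm_sq[OF op_abs_pos[OF adj_bop[OF X]] g1', of y] by (metis norm_ge_zero real_sqrt_unique)
  show ?thesis using mixed_schwarz[OF X g0 g1, of x y] unfolding a b .
qed

lemma sqrt_cs:
  fixes a b c d :: real
  assumes "0 \<le> a" "0 \<le> b" "0 \<le> c" "0 \<le> d"
  shows "sqrt a * sqrt b + sqrt c * sqrt d \<le> sqrt (a + d) * sqrt (b + c)"
proof -
  define A where "A = sqrt a"
  define B where "B = sqrt b"
  define C where "C = sqrt c"
  define D where "D = sqrt d"
  have a: "a = A\<^sup>2" "b = B\<^sup>2" "c = C\<^sup>2" "d = D\<^sup>2"
    unfolding A_def B_def C_def D_def
    by (simp_all only: real_sqrt_pow2[OF assms(1)] real_sqrt_pow2[OF assms(2)]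
        real_sqrt_pow2[OF assms(3)] real_sqrt_pow2[OF assms(4)])
  have nn: "0 \<le> A" "0 \<le> B" "0 \<le> C" "0 \<le> D" unfolding A_def B_def C_def D_def using assms by auto
  have "(A * B + C * D)\<^sup>2 \<le> (A\<^sup>2 + D\<^sup>2) * (B\<^sup>2 + C\<^sup>2)"
  proof -
    have "0 \<le> (A * C - D * B)\<^sup>2" by simp
    then show ?thesis by (simp add: power2_eq_square algebra_simps)
  qed
  also have "\<dots> = (sqrt (a + d) * sqrt (b + c))\<^sup>2"
    using assms by (simp add: a power_mult_distrib)
  finally have "(A * B + C * D)\<^sup>2 \<le> (sqrt (a + d) * sqrt (b + c))\<^sup>2" .
  then have "A * B + C * D \<le> sqrt (a + d) * sqrt (b + c)"
    by (rule power2_le_imp_le) (use assms in simp)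
  then show ?thesis by (simp add: A_def B_def C_def D_def)
qed

lemma bop_sum_op:
  assumes F: "bounded_op F" and G: "bounded_op G"
  shows "bounded_op (\<lambda>x. F x + G x)"
proof (rule bounded_op_intro[where K="onorm F + onorm G"])
  fix x
  have "norm (F x + G x) \<le> norm (F x) + norm (G x)" by (rule norm_triangle_ineq)
  also have "\<dots> \<le> onorm F * norm x + onorm G * norm x" by (intro add_mono bop_onorm F G)
  finally show "norm (F x + G x) \<le> (onorm F + onorm G) * norm x" by (simp add: algebra_simps)
qed (simp_all add: bop_add[OF F] bop_add[OF G] bop_scaleC[OF F] bop_scaleC[OF G] scaleC_add_right)

lemma quad_le_onorm:
  assumes A: "bounded_op A"
  shows "Re (cinner (A x) x) \<le> onorm A * (norm x)\<^sup>2"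
proof -
  have "Re (cinner (A x) x) \<le> cmod (cinner (A x) x)" by (rule complex_Re_le_cmod)
  also have "\<dots> \<le> norm (A x) * norm x" by (rule cinner_cs)
  also have "\<dots> \<le> onorm A * norm x * norm x" by (intro mult_right_mono bop_onorm[OF A]) simp
  finally show ?thesis by (simp add: power2_eq_square mult.assoc)
qed

lemma T_apply: "op_matrix (\<lambda>x. 0) X Y (\<lambda>x. 0) (x1, x2) = (X x2, Y x1)"
  by (simp add: op_matrix_def)

lemma cinner_Pair: "cinner (a::'a::chilbert, b::'b::chilbert) (c, d) = cinner a c + cinner b d"
  by (simp add: cinner_prod_def)

lemma scaleC_Pair: "scaleC c (a::'a::chilbert, b::'b::chilbert) = (scaleC c a, scaleC c b)"
  by (simp add: scaleC_prod_def)

lemma norm_Pair_sq: "(norm (a, b))\<^sup>2 = (norm a)\<^sup>2 + (norm b)\<^sup>2"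
  by (simp add: norm_Pair)

lemma Tuu_bound:
  fixes X Y :: "'a::chilbert \<Rightarrow> 'a"
  assumes X: "bounded_op X" and Y: "bounded_op Y" and g0: "0 \<le> g" and g1: "g \<le> 1"
  shows "cmod (cinner (op_matrix (\<lambda>x. 0) X Y (\<lambda>x. 0) (x1, x2)) (x1, x2))
    \<le> sqrt (onorm (\<lambda>x. op_pow (op_abs X) (2 * g) x + op_pow (op_abs (adj Y)) (2 * (1 - g)) x))
      * sqrt (onorm (\<lambda>x. op_pow (op_abs (adj X)) (2 * (1 - g)) x + op_pow (op_abs Y) (2 * g) x))
      * (norm x1 * norm x2)"
proof -
  let ?RX = "op_pow (op_abs X) (2 * g)" and ?SX = "op_pow (op_abs (adj X)) (2 * (1 - g))"
  let ?RY = "op_pow (op_abs Y) (2 * g)" and ?SY = "op_pow (op_abs (adj Y)) (2 * (1 - g))"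
  have e1: "0 \<le> 2 * g" and e2: "0 \<le> 2 * (1 - g)" using g0 g1 by simp_all
  have pRX: "pos ?RX" by (rule op_pow_pos[OF op_abs_pos[OF X] e1])
  have pSX: "pos ?SX" by (rule op_pow_pos[OF op_abs_pos[OF adj_bop[OF X]] e2])
  have pRY: "pos ?RY" by (rule op_pow_pos[OF op_abs_pos[OF Y] e1])
  have pSY: "pos ?SY" by (rule op_pow_pos[OF op_abs_pos[OF adj_bop[OF Y]] e2])
  define a where "a = Re (cinner (?RX x2) x2)"
  define b where "b = Re (cinner (?SX x1) x1)"
  define c where "c = Re (cinner (?RY x1) x1)"
  define d where "d = Re (cinner (?SY x2) x2)"
  have nn: "0 \<le> a" "0 \<le> b" "0 \<le> c" "0 \<le> d"
    unfolding a_def b_def c_def d_def by (rule pos_nonneg[OF pRX] pos_nonneg[OF pSX] pos_nonneg[OF pRY] pos_nonneg[OF pSY])+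
  define A1 where "A1 = (\<lambda>x. ?RX x + ?SY x)"
  define A2 where "A2 = (\<lambda>x. ?SX x + ?RY x)"
  have bA1: "bounded_op A1" unfolding A1_def by (rule bop_sum_op[OF pos_bop[OF pRX] pos_bop[OF pSY]])
  have bA2: "bounded_op A2" unfolding A2_def by (rule bop_sum_op[OF pos_bop[OF pSX] pos_bop[OF pRY]])
  have ad: "a + d \<le> onorm A1 * (norm x2)\<^sup>2"
    using quad_le_onorm[OF bA1, of x2] by (simp add: A1_def a_def d_def cinner_add_left)
  have bc: "b + c \<le> onorm A2 * (norm x1)\<^sup>2"
    using quad_le_onorm[OF bA2, of x1] by (simp add: A2_def b_def c_def cinner_add_left)
  have o1: "0 \<le> onorm A1" by (rule bop_onorm_nonneg[OF bA1])
  have o2: "0 \<le> onorm A2" by (rule bop_onorm_nonneg[OF bA2])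
  have "cmod (cinner (op_matrix (\<lambda>x. 0) X Y (\<lambda>x. 0) (x1, x2)) (x1, x2))
        = cmod (cinner (X x2) x1 + cinner (Y x1) x2)"
    by (simp add: T_apply cinner_Pair)
  also have "\<dots> \<le> cmod (cinner (X x2) x1) + cmod (cinner (Y x1) x2)" by (rule norm_triangle_ineq)
  also have "\<dots> \<le> sqrt a * sqrt b + sqrt c * sqrt d"
    unfolding a_def b_def c_def d_def
    by (intro add_mono mixed_schwarz2[OF X g0 g1] order_trans[OF mixed_schwarz2[OF Y g0 g1]])
       (simp add: mult.commute)
  also have "\<dots> \<le> sqrt (a + d) * sqrt (b + c)" by (rule sqrt_cs[OF nn])
  also have "\<dots> \<le> sqrt (onorm A1 * (norm x2)\<^sup>2) * sqrt (onorm A2 * (norm x1)\<^sup>2)"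
    by (intro mult_mono real_sqrt_le_mono ad bc) (simp_all add: o1 o2 nn add_nonneg_nonneg)
  also have "\<dots> = sqrt (onorm A1) * sqrt (onorm A2) * (norm x1 * norm x2)"
    by (simp add: real_sqrt_mult)
  finally show ?thesis by (simp add: A1_def A2_def)
qed

lemma T_norm:
  fixes X Y :: "'a::chilbert \<Rightarrow> 'a"
  assumes X: "bounded_op X" and Y: "bounded_op Y"
  shows "norm (op_matrix (\<lambda>x. 0) X Y (\<lambda>x. 0) u) \<le> max (onorm X) (onorm Y) * norm u"
proof -
  obtain x1 x2 where u: "u = (x1, x2)" by (cases u)
  define M where "M = max (onorm X) (onorm Y)"
  have M0: "0 \<le> M" using bop_onorm_nonneg[OF X] by (simp add: M_def)
  have "norm (X x2) \<le> M * norm x2"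
    using bop_onorm[OF X, of x2] mult_right_mono[of "onorm X" M "norm x2"] by (simp add: M_def)
  then have 1: "(norm (X x2))\<^sup>2 \<le> (M * norm x2)\<^sup>2" by (intro power_mono) simp_all
  have "norm (Y x1) \<le> M * norm x1"
    using bop_onorm[OF Y, of x1] mult_right_mono[of "onorm Y" M "norm x1"] by (simp add: M_def)
  then have 2: "(norm (Y x1))\<^sup>2 \<le> (M * norm x1)\<^sup>2" by (intro power_mono) simp_all
  have "(norm (op_matrix (\<lambda>x. 0) X Y (\<lambda>x. 0) u))\<^sup>2 = (norm (X x2))\<^sup>2 + (norm (Y x1))\<^sup>2"
    by (simp add: u T_apply norm_Pair_sq)
  also have "\<dots> \<le> (M * norm u)\<^sup>2" using 1 2 by (simp add: u norm_Pair_sq power_mult_distrib algebra_simps)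
  finally show ?thesis unfolding M_def[symmetric] by (rule power2_le_imp_le) (simp add: M0)
qed

definition Wset :: "complex \<Rightarrow> ('a::chilbert \<Rightarrow> 'a) \<Rightarrow> real set" where
  "Wset q T = {cmod (cinner (T x) y) | x y. norm x = 1 \<and> norm y = 1 \<and> cinner x y = q}"

lemma q_numrad_Wset: "q_numrad q T = Sup (Wset q T)"
  by (simp add: q_numrad_def Wset_def)

lemma Wset_bdd:
  fixes X Y :: "'a::chilbert \<Rightarrow> 'a"
  assumes X: "bounded_op X" and Y: "bounded_op Y"
  shows "bdd_above (Wset q (op_matrix (\<lambda>x. 0) X Y (\<lambda>x. 0)))"
proof (rule bdd_aboveI)
  fix w assume "w \<in> Wset q (op_matrix (\<lambda>x. 0) X Y (\<lambda>x. 0))"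
  then obtain u v where uv: "norm u = 1" "norm v = 1" "w = cmod (cinner (op_matrix (\<lambda>x. 0) X Y (\<lambda>x. 0) u) v)"
    unfolding Wset_def by blast
  have "w \<le> norm (op_matrix (\<lambda>x. 0) X Y (\<lambda>x. 0) u) * norm v" using uv cinner_cs by metis
  also have "\<dots> \<le> max (onorm X) (onorm Y)" using T_norm[OF X Y, of u] uv by simp
  finally show "w \<le> max (onorm X) (onorm Y)" .
qed

lemma Wset_ne:
  assumes ex: "\<exists>x::'a::chilbert. x \<noteq> 0" and q1: "cmod q \<le> 1"
  shows "Wset q (T :: 'a \<times> 'a \<Rightarrow> 'a \<times> 'a) \<noteq> {}"
proof -
  obtain x0 :: 'a where x0: "x0 \<noteq> 0" using ex by blast
  define e where "e = (1 / norm x0) *\<^sub>R x0"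
  have e: "norm e = 1" using x0 by (simp add: e_def)
  define r where "r = sqrt (1 - (cmod q)\<^sup>2)"
  have "(cmod q)\<^sup>2 \<le> 1" using q1 by (simp add: power_le_one)
  then have r2: "r\<^sup>2 = 1 - (cmod q)\<^sup>2" unfolding r_def by simp
  define u where "u = (e, 0::'a)"
  define v where "v = (scaleC (cnj q) e, r *\<^sub>R e)"
  have nu: "norm u = 1" using e by (simp add: u_def norm_Pair)
  have "(norm v)\<^sup>2 = 1" using e r2 by (simp add: v_def norm_Pair_sq norm_scaleC power_mult_distrib)
  then have nv: "norm v = 1" using norm_ge_zero[of v] by (simp add: power2_eq_1_iff)
  have "cinner u v = q" using e by (simp add: u_def v_def cinner_Pair cinner_scaleC_right cinner_self)
  then have "cmod (cinner (T u) v) \<in> Wset q T" unfolding Wset_def using nu nv by blast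
  then show ?thesis by blast
qed

lemma Wset_nonneg: "w \<in> Wset q T \<Longrightarrow> 0 \<le> w"
  unfolding Wset_def by auto

lemma upper_elem:
  fixes X Y :: "'a::chilbert \<Rightarrow> 'a"
  assumes X: "bounded_op X" and Y: "bounded_op Y" and g0: "0 \<le> g" and g1: "g \<le> 1"
    and nu: "norm u = 1" and nv: "norm v = 1" and uv: "cinner u v = q"
  shows "cmod (cinner (op_matrix (\<lambda>x. 0) X Y (\<lambda>x. 0) u) v)
    \<le> cmod q / 2
        * sqrt (onorm (\<lambda>x. op_pow (op_abs X) (2 * g) x + op_pow (op_abs (adj Y)) (2 * (1 - g)) x))
        * sqrt (onorm (\<lambda>x. op_pow (op_abs (adj X)) (2 * (1 - g)) x + op_pow (op_abs Y) (2 * g) x))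
      + sqrt (1 - (cmod q)\<^sup>2) * max (onorm X) (onorm Y)"
proof -
  let ?T = "op_matrix (\<lambda>x. 0) X Y (\<lambda>x. 0)"
  define K where "K = sqrt (onorm (\<lambda>x. op_pow (op_abs X) (2 * g) x + op_pow (op_abs (adj Y)) (2 * (1 - g)) x))
        * sqrt (onorm (\<lambda>x. op_pow (op_abs (adj X)) (2 * (1 - g)) x + op_pow (op_abs Y) (2 * g) x))"
  define M where "M = max (onorm X) (onorm Y)"
  obtain x1 x2 where u: "u = (x1, x2)" by (cases u)
  have e1: "0 \<le> 2 * g" and e2: "0 \<le> 2 * (1 - g)" using g0 g1 by simp_all
  have K0: "0 \<le> K" unfolding K_def
    by (intro mult_nonneg_nonneg real_sqrt_ge_zero bop_onorm_nonneg bop_sum_op pos_bop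
        op_pow_pos op_abs_pos adj_bop X Y e1 e2)
  have M0: "0 \<le> M" using bop_onorm_nonneg[OF X] by (simp add: M_def)
  have uu: "cinner u u = 1" using nu by (simp add: cinner_self)
  define w where "w = v - scaleC (cnj q) u"
  have uw: "cinner u w = 0" by (simp add: w_def cinner_diff_right cinner_scaleC_right uu uv)
  have vw: "v = scaleC (cnj q) u + w" by (simp add: w_def)
  have "1 = (norm v)\<^sup>2" using nv by simp
  also have "\<dots> = (cmod q)\<^sup>2 + (norm w)\<^sup>2"
    unfolding vw norm_add_sq by (simp add: norm_scaleC nu cinner_scaleC_left uw)
  finally have nw: "norm w = sqrt (1 - (cmod q)\<^sup>2)"
    by (metis add_diff_cancel_left' norm_ge_zero real_sqrt_unique)
  have TT: "cinner (?T u) v = q * cinner (?T u) u + cinner (?T u) w"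
    unfolding vw by (simp add: cinner_add_right cinner_scaleC_right)
  have h1: "cmod (cinner (?T u) u) \<le> K * (norm x1 * norm x2)"
    unfolding u K_def by (rule Tuu_bound[OF X Y g0 g1])
  have "2 * (norm x1 * norm x2) \<le> (norm x1)\<^sup>2 + (norm x2)\<^sup>2"
    using sum_squares_bound[of "norm x1" "norm x2"] by simp
  also have "\<dots> = 1" using nu by (simp add: u norm_Pair_sq[symmetric])
  finally have h2: "norm x1 * norm x2 \<le> 1/2" by simp
  have h3: "cmod (cinner (?T u) u) \<le> K / 2"
    using h1 mult_left_mono[OF h2 K0] by simp
  have h4: "cmod (cinner (?T u) w) \<le> M * sqrt (1 - (cmod q)\<^sup>2)"
  proof -
    have "cmod (cinner (?T u) w) \<le> norm (?T u) * norm w" by (rule cinner_cs)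
    also have "\<dots> \<le> M * norm w" using T_norm[OF X Y, of u] nu by (intro mult_right_mono) (simp_all add: M_def)
    finally show ?thesis by (simp add: nw)
  qed
  have "cmod (cinner (?T u) v) \<le> cmod q * cmod (cinner (?T u) u) + cmod (cinner (?T u) w)"
    unfolding TT using norm_triangle_ineq[of "q * cinner (?T u) u"] by (simp add: norm_mult)
  also have "\<dots> \<le> cmod q * (K / 2) + M * sqrt (1 - (cmod q)\<^sup>2)"
    by (intro add_mono mult_left_mono h3 h4) simp
  finally show ?thesis by (simp add: K_def M_def algebra_simps)
qed

lemma lower_key:
  fixes X Y :: "'a::chilbert \<Rightarrow> 'a"
  assumes X: "bounded_op X" and Y: "bounded_op Y" and q1: "cmod q \<le> 1"
    and na: "norm a = 1" and nb: "norm b = 1" and e1: "cmod e = 1"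
  shows "cmod q * cmod (e * cinner (X b) a + cnj e * cinner (adj Y b) a)
          \<le> 2 * Sup (Wset q (op_matrix (\<lambda>x. 0) X Y (\<lambda>x. 0)))"
proof -
  let ?T = "op_matrix (\<lambda>x. 0) X Y (\<lambda>x. 0)"
  let ?W = "Wset q ?T"
  define \<zeta> where "\<zeta> = e * cinner (X b) a + cnj e * cinner (adj Y b) a"
  define \<mu> where "\<mu> = (if \<zeta> = 0 then 1 else cnj \<zeta> / of_real (cmod \<zeta>))"
  have mu1: "cmod \<mu> = 1" by (simp add: \<mu>_def norm_divide)
  have muz: "\<mu> * \<zeta> = of_real (cmod \<zeta>)"
  proof (cases "\<zeta> = 0")
    case False
    have "\<zeta> * cnj \<zeta> = of_real ((cmod \<zeta>)\<^sup>2)" using complex_norm_square[of \<zeta>] by simp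
    then have "cnj \<zeta> * \<zeta> = of_real ((cmod \<zeta>)\<^sup>2)" by (metis mult.commute)
    then show ?thesis using False by (simp add: \<mu>_def power2_eq_square)
  qed (simp add: \<mu>_def)
  have mumu: "cnj \<mu> * \<mu> = 1"
  proof -
    have "\<mu> * cnj \<mu> = 1" using mu1 complex_norm_square[of \<mu>] by simp
    then show ?thesis by (metis mult.commute)
  qed
  define h :: real where "h = 1 / sqrt 2"
  have h2: "h * h = 1/2" by (simp add: h_def)
  have hc: "complex_of_real h * complex_of_real h = 1/2"
    by (simp only: of_real_mult[symmetric] h2) simp
  have hc2: "2 * complex_of_real h * complex_of_real h = 1" by (simp only: mult.assoc hc) simp
  define u where "u = h *\<^sub>R (a, scaleC \<mu> b)"
  define z where "z = h *\<^sub>R (a, - scaleC \<mu> b)"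
  have aa: "cinner a a = 1" using na by (simp add: cinner_self)
  have bb: "cinner (scaleC \<mu> b) (scaleC \<mu> b) = 1"
    by (simp add: cinner_self norm_scaleC mu1 nb)
  have uu: "cinner u u = 1"
    by (simp add: u_def cinner_scaleR_left cinner_scaleR_right cinner_Pair aa bb mult.assoc[symmetric] h2 hc hc2)
  have zz: "cinner z z = 1"
    by (simp add: z_def cinner_scaleR_left cinner_scaleR_right cinner_Pair aa bb cinner_minus_left cinner_minus_right
        mult.assoc[symmetric] h2 hc hc2)
  have uz: "cinner u z = 0"
    by (simp add: u_def z_def cinner_scaleR_left cinner_scaleR_right cinner_Pair aa bb cinner_minus_right)
  have "(norm u)\<^sup>2 = 1" using uu cinner_self_Re[of u] by simp
  then have nu: "norm u = 1" using norm_ge_zero[of u] by (simp add: power2_eq_1_iff)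
  have "(norm z)\<^sup>2 = 1" using zz cinner_self_Re[of z] by simp
  then have nz: "norm z = 1" using norm_ge_zero[of z] by (simp add: power2_eq_1_iff)
  define r where "r = sqrt (1 - (cmod q)\<^sup>2)"
  have "(cmod q)\<^sup>2 \<le> 1" using q1 by (simp add: power_le_one)
  then have r2: "r\<^sup>2 = 1 - (cmod q)\<^sup>2" unfolding r_def by simp
  have inW: "cmod (cinner (?T u) (scaleC (cnj q) u + s *\<^sub>R z)) \<in> ?W" if s: "s = r \<or> s = - r" for s
  proof -
    let ?v = "scaleC (cnj q) u + s *\<^sub>R z"
    have s2: "s\<^sup>2 = 1 - (cmod q)\<^sup>2" using s r2 by auto
    have "(norm ?v)\<^sup>2 = (cmod q)\<^sup>2 + s\<^sup>2"
      unfolding norm_add_sq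
      by (simp add: norm_scaleC nu nz cinner_scaleC_left cinner_scaleR_right uz power_mult_distrib)
    then have "(norm ?v)\<^sup>2 = 1" using s2 by simp
    then have nv: "norm ?v = 1" using norm_ge_zero[of ?v] by (simp add: power2_eq_1_iff)
    have "cinner u ?v = q" by (simp add: cinner_add_right cinner_scaleC_right cinner_scaleR_right uu uz)
    then show ?thesis unfolding Wset_def using nu nv by blast
  qed
  have bdd: "bdd_above ?W" by (rule Wset_bdd[OF X Y])
  have le1: "cmod (cinner (?T u) (scaleC (cnj q) u + s *\<^sub>R z)) \<le> Sup ?W" if "s = r \<or> s = - r" for s
    by (rule cSup_upper[OF inW[OF that] bdd])
  define A where "A = q * cinner (?T u) u"
  define B where "B = r * cinner (?T u) z"
  have v1: "cinner (?T u) (scaleC (cnj q) u + r *\<^sub>R z) = A + B"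
    by (simp add: A_def B_def cinner_add_right cinner_scaleC_right cinner_scaleR_right)
  have v2: "cinner (?T u) (scaleC (cnj q) u + (- r) *\<^sub>R z) = A - B"
    by (simp only: A_def B_def cinner_add_right cinner_scaleC_right cinner_scaleR_right) simp
  have "2 * cmod A \<le> cmod (A + B) + cmod (A - B)"
    using norm_triangle_ineq[of "A + B" "A - B"] by simp
  also have "\<dots> \<le> 2 * Sup ?W" using le1[of r] le1[of "-r"] unfolding v1 v2 by simp
  finally have A2: "cmod A \<le> Sup ?W" by simp
  have Tu: "?T u = h *\<^sub>R (scaleC \<mu> (X b), Y a)"
    by (simp add: u_def T_apply bop_scaleR[OF X] bop_scaleR[OF Y] bop_scaleC[OF X])
  have "cinner (?T u) u = complex_of_real h * (complex_of_real h *
          (cinner (scaleC \<mu> (X b)) a + cinner (Y a) (scaleC \<mu> b)))"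
    unfolding Tu by (simp only: u_def cinner_scaleR_left cinner_scaleR_right cinner_Pair)
  also have "\<dots> = (complex_of_real h * complex_of_real h) *
          (\<mu> * cinner (X b) a + cnj \<mu> * cinner (Y a) b)"
    by (simp only: mult.assoc[symmetric] cinner_scaleC_left cinner_scaleC_right)
  finally have "cinner (?T u) u * 2 = \<mu> * cinner (X b) a + cnj \<mu> * cinner (Y a) b"
    by (simp add: hc)
  then have Tuu: "2 * cinner (?T u) u = \<mu> * cinner (X b) a + cnj \<mu> * cinner (Y a) b"
    by (simp only: mult.commute)
  have adjY: "cinner (adj Y b) a = cnj (cinner (Y a) b)"
    by (metis adj_prop'[OF Y] cinner_commute)
  have "Re (e * (2 * cinner (?T u) u)) = Re (\<mu> * \<zeta>)"
    unfolding Tuu \<zeta>_def adjY by (simp add: algebra_simps)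
  then have "cmod \<zeta> = Re (e * (2 * cinner (?T u) u))" using muz by simp
  also have "\<dots> \<le> cmod (e * (2 * cinner (?T u) u))" by (rule complex_Re_le_cmod)
  also have "\<dots> = 2 * cmod (cinner (?T u) u)" by (simp add: norm_mult e1)
  finally have "cmod q * cmod \<zeta> \<le> cmod q * (2 * cmod (cinner (?T u) u))" by (intro mult_left_mono) simp_all
  also have "\<dots> = 2 * cmod A" by (simp add: A_def norm_mult)
  also have "\<dots> \<le> 2 * Sup ?W" using A2 by simp
  finally show ?thesis by (simp add: \<zeta>_def)
qed

lemma Z_bound:
  fixes X Y :: "'a::chilbert \<Rightarrow> 'a" and \<theta> :: real
  assumes X: "bounded_op X" and Y: "bounded_op Y" and q0: "q \<noteq> 0" and q1: "cmod q \<le> 1"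
    and W0: "0 \<le> Sup (Wset q (op_matrix (\<lambda>x. 0) X Y (\<lambda>x. 0)))"
  shows "onorm (\<lambda>x. scaleC (exp (\<i> * \<theta>)) (X x) + scaleC (exp (- \<i> * \<theta>)) (adj Y x))
          \<le> 2 * Sup (Wset q (op_matrix (\<lambda>x. 0) X Y (\<lambda>x. 0))) / cmod q"
proof -
  let ?S = "Sup (Wset q (op_matrix (\<lambda>x. 0) X Y (\<lambda>x. 0)))"
  define e where "e = exp (\<i> * complex_of_real \<theta>)"
  have e1: "cmod e = 1" by (simp add: e_def)
  have ec: "exp (- \<i> * complex_of_real \<theta>) = cnj e" by (simp add: e_def exp_cnj)
  define Z where "Z = (\<lambda>x. scaleC e (X x) + scaleC (cnj e) (adj Y x))"
  have Zeq: "(\<lambda>x. scaleC (exp (\<i> * \<theta>)) (X x) + scaleC (exp (- \<i> * \<theta>)) (adj Y x)) = Z"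
    by (simp only: Z_def ec e_def[symmetric])
  have AY: "bounded_op (adj Y)" by (rule adj_bop[OF Y])
  have Zr: "Z (r *\<^sub>R x) = r *\<^sub>R Z x" for r x
    by (simp add: Z_def bop_scaleR[OF X] bop_scaleR[OF AY] scaleC_scaleR_comm scaleR_add_right)
  have Z0: "Z 0 = 0" by (simp add: Z_def bop_zero[OF X] bop_zero[OF AY])
  have qp: "0 < cmod q" using q0 by simp
  have unit: "norm (Z b) \<le> 2 * ?S / cmod q" if nb: "norm b = 1" for b
  proof (cases "Z b = 0")
    case True then show ?thesis using W0 qp by simp
  next
    case False
    define a where "a = (1 / norm (Z b)) *\<^sub>R Z b"
    have na: "norm a = 1" using False by (simp add: a_def)
    have "cinner (Z b) a = of_real (1 / norm (Z b)) * of_real ((norm (Z b))\<^sup>2)"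
      by (simp add: a_def cinner_scaleR_right cinner_self)
    also have "\<dots> = of_real (norm (Z b))" using False by (simp add: power2_eq_square)
    finally have za: "cinner (Z b) a = of_real (norm (Z b))" .
    have "cinner (Z b) a = e * cinner (X b) a + cnj e * cinner (adj Y b) a"
      by (simp add: Z_def cinner_add_left cinner_scaleC_left)
    with za have "norm (Z b) = cmod (e * cinner (X b) a + cnj e * cinner (adj Y b) a)"
      by (metis norm_of_real abs_norm_cancel)
    then have "cmod q * norm (Z b) \<le> 2 * ?S"
      using lower_key[OF X Y q1 na nb e1] by simp
    then show ?thesis using qp by (simp add: field_simps)
  qed
  have "onorm Z \<le> 2 * ?S / cmod q"
  proof (rule onorm_le')
    show "0 \<le> 2 * ?S / cmod q" using W0 qp by simp
    fix x
    show "norm (Z x) \<le> 2 * ?S / cmod q * norm x"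
    proof (cases "x = 0")
      case True then show ?thesis by (simp add: Z0)
    next
      case False
      define b where "b = (1 / norm x) *\<^sub>R x"
      have nb: "norm b = 1" using False by (simp add: b_def)
      have xb: "x = norm x *\<^sub>R b" using False by (simp add: b_def)
      have "norm (Z x) = norm x * norm (Z b)" by (subst xb) (simp add: Zr)
      also have "\<dots> \<le> norm x * (2 * ?S / cmod q)" by (intro mult_left_mono unit[OF nb]) simp
      finally show ?thesis by (simp add: mult.commute)
    qed
  qed
  then show ?thesis unfolding Zeq .
qed

theorem theorem3p11:
  fixes X Y :: "'a::chilbert \<Rightarrow> 'a" and q :: complex and \<gamma> :: real
  assumes "\<exists>x::'a. x \<noteq> 0"
    and "bounded_op X" and "bounded_op Y"
    and "q \<noteq> 0" and "cmod q \<le> 1"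
    and "0 \<le> \<gamma>" and "\<gamma> \<le> 1"
  shows "cmod q / 2 * (SUP \<theta>::real. onorm (\<lambda>x. scaleC (exp (\<i> * \<theta>)) (X x) + scaleC (exp (- \<i> * \<theta>)) (adj Y x)))
           \<le> q_numrad q (op_matrix (\<lambda>x. 0) X Y (\<lambda>x. 0))
         \<and> q_numrad q (op_matrix (\<lambda>x. 0) X Y (\<lambda>x. 0))
           \<le> cmod q / 2
               * sqrt (onorm (\<lambda>x. op_pow (op_abs X) (2 * \<gamma>) x + op_pow (op_abs (adj Y)) (2 * (1 - \<gamma>)) x))
               * sqrt (onorm (\<lambda>x. op_pow (op_abs (adj X)) (2 * (1 - \<gamma>)) x + op_pow (op_abs Y) (2 * \<gamma>) x))
             + sqrt (1 - (cmod q)\<^sup>2) * max (onorm X) (onorm Y)"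
proof
  let ?T = "op_matrix (\<lambda>x. 0) X Y (\<lambda>x. 0)"
  let ?W = "Wset q ?T"
  have X: "bounded_op X" and Y: "bounded_op Y" using assms by simp_all
  have ne: "?W \<noteq> {}" by (rule Wset_ne[OF assms(1) assms(5)])
  have bdd: "bdd_above ?W" by (rule Wset_bdd[OF X Y])
  have W0: "0 \<le> Sup ?W"
  proof -
    obtain w where w: "w \<in> ?W" using ne by blast
    then show ?thesis using Wset_nonneg[OF w] cSup_upper[OF w bdd] by linarith
  qed
  have qp: "0 < cmod q" using assms(4) by simp
  have "(SUP \<theta>::real. onorm (\<lambda>x. scaleC (exp (\<i> * \<theta>)) (X x) + scaleC (exp (- \<i> * \<theta>)) (adj Y x)))
        \<le> 2 * Sup ?W / cmod q"
    by (rule cSUP_least) (simp, rule Z_bound[OF X Y assms(4) assms(5) W0])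
  then have "cmod q / 2 * (SUP \<theta>::real. onorm (\<lambda>x. scaleC (exp (\<i> * \<theta>)) (X x) + scaleC (exp (- \<i> * \<theta>)) (adj Y x)))
        \<le> cmod q / 2 * (2 * Sup ?W / cmod q)"
    by (rule mult_left_mono) simp
  also have "\<dots> = Sup ?W" using qp by simp
  finally show "cmod q / 2 * (SUP \<theta>::real. onorm (\<lambda>x. scaleC (exp (\<i> * \<theta>)) (X x) + scaleC (exp (- \<i> * \<theta>)) (adj Y x)))
           \<le> q_numrad q ?T" by (simp add: q_numrad_Wset)
next
  let ?T = "op_matrix (\<lambda>x. 0) X Y (\<lambda>x. 0)"
  let ?W = "Wset q ?T"
  have X: "bounded_op X" and Y: "bounded_op Y" using assms by simp_all
  have ne: "?W \<noteq> {}" by (rule Wset_ne[OF assms(1) assms(5)])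
  have "Sup ?W \<le> cmod q / 2
               * sqrt (onorm (\<lambda>x. op_pow (op_abs X) (2 * \<gamma>) x + op_pow (op_abs (adj Y)) (2 * (1 - \<gamma>)) x))
               * sqrt (onorm (\<lambda>x. op_pow (op_abs (adj X)) (2 * (1 - \<gamma>)) x + op_pow (op_abs Y) (2 * \<gamma>) x))
             + sqrt (1 - (cmod q)\<^sup>2) * max (onorm X) (onorm Y)"
  proof (rule cSup_least[OF ne])
    fix w assume "w \<in> ?W"
    then obtain u v where uv: "norm u = 1" "norm v = 1" "cinner u v = q" "w = cmod (cinner (?T u) v)"
      unfolding Wset_def by blast
    show "w \<le> cmod q / 2
               * sqrt (onorm (\<lambda>x. op_pow (op_abs X) (2 * \<gamma>) x + op_pow (op_abs (adj Y)) (2 * (1 - \<gamma>)) x))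
               * sqrt (onorm (\<lambda>x. op_pow (op_abs (adj X)) (2 * (1 - \<gamma>)) x + op_pow (op_abs Y) (2 * \<gamma>) x))
             + sqrt (1 - (cmod q)\<^sup>2) * max (onorm X) (onorm Y)"
      unfolding uv(4) by (rule upper_elem[OF X Y assms(6) assms(7) uv(1) uv(2) uv(3)])
  qed
  then show "q_numrad q ?T \<le> cmod q / 2
               * sqrt (onorm (\<lambda>x. op_pow (op_abs X) (2 * \<gamma>) x + op_pow (op_abs (adj Y)) (2 * (1 - \<gamma>)) x))
               * sqrt (onorm (\<lambda>x. op_pow (op_abs (adj X)) (2 * (1 - \<gamma>)) x + op_pow (op_abs Y) (2 * \<gamma>) x))
             + sqrt (1 - (cmod q)\<^sup>2) * max (onorm X) (onorm Y)"
    by (simp add: q_numrad_Wset)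
qed

end
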